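(* Let $g\geq 3$ be an integer and $p$ a prime. Then \[H_2(\mathfrak{sp}_{2g}(p);\mathbb Z)_{Sp(2g,\mathbb Z/p\mathbb Z)}=\begin{cases}0, & p \text{ odd},\\ \mathbb Z/2\mathbb Z, & p=2.\end{cases}\]
   Context: $\mathfrak{sp}_{2g}(p)$ is the additive (abelian) group of $2g\times 2g$ matrices $M$ with entries in $\mathbb Z/p\mathbb Z$ satisfying $M^{\top}J_g+J_gM=0$, where $J_g=\begin{pmatrix}0&\mathbf 1_g\\-\mathbf 1_g&0\end{pmatrix}$; equivalently $M=\begin{pmatrix}A&B\\C&D\end{pmatrix}$ with $A+D^{\top}=0$ and $B$, $C$ symmetric. The group $Sp(2g,\mathbb Z/p\mathbb Z)$ acts on it by conjugation, inducing an action on $H_2(\mathfrak{sp}_{2g}(p);\mathbb Z)\cong\wedge^2\mathfrak{sp}_{2g}(p)$; the subscript denotes coinvariants (quotient by the subgroup generated by $g\cdot x-x$). *)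

theory Defs
  imports "HOL-Algebra.Free_Abelian_Groups" "HOL-Algebra.Elementary_Groups"
    "HOL-Algebra.Generated_Groups" "HOL-Computational_Algebra.Primes"
begin

text \<open>Square matrices of size n over Z/pZ, represented as functions
  nat => nat => int whose entries with indices i,j < n lie in {0..<p}
  and which vanish outside the n x n block.\<close>

type_synonym mat = "nat \<Rightarrow> nat \<Rightarrow> int"

definition is_mat :: "nat \<Rightarrow> nat \<Rightarrow> mat \<Rightarrow> bool" where
  "is_mat p n M \<longleftrightarrow> (\<forall>i j. (i < n \<and> j < n \<longrightarrow> 0 \<le> M i j \<and> M i j < int p)
                          \<and> (\<not> (i < n \<and> j < n) \<longrightarrow> M i j = 0))"

definition mat_add :: "nat \<Rightarrow> nat \<Rightarrow> mat \<Rightarrow> mat \<Rightarrow> mat" where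
  "mat_add p n A B = (\<lambda>i j. if i < n \<and> j < n then (A i j + B i j) mod int p else 0)"

definition mat_mul :: "nat \<Rightarrow> nat \<Rightarrow> mat \<Rightarrow> mat \<Rightarrow> mat" where
  "mat_mul p n A B = (\<lambda>i j. if i < n \<and> j < n then (\<Sum>k<n. A i k * B k j) mod int p else 0)"

definition mat_trans :: "nat \<Rightarrow> mat \<Rightarrow> mat" where
  "mat_trans n A = (\<lambda>i j. if i < n \<and> j < n then A j i else 0)"

definition mat_zero :: mat where
  "mat_zero = (\<lambda>i j. 0)"

definition mat_one :: "nat \<Rightarrow> mat" where
  "mat_one n = (\<lambda>i j. if i < n \<and> j < n \<and> i = j then 1 else 0)"

text \<open>J_g = [[0, 1_g], [-1_g, 0]] with entries reduced mod p.\<close>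
definition J_mat :: "nat \<Rightarrow> nat \<Rightarrow> mat" where
  "J_mat p g = (\<lambda>i j. if i < g \<and> j = i + g then 1 mod int p
                      else if g \<le> i \<and> i < 2*g \<and> j = i - g then (-1) mod int p
                      else 0)"

definition sp_lie :: "nat \<Rightarrow> nat \<Rightarrow> mat set" where
  "sp_lie p g = {M. is_mat p (2*g) M \<and>
     mat_add p (2*g) (mat_mul p (2*g) (mat_trans (2*g) M) (J_mat p g))
                     (mat_mul p (2*g) (J_mat p g) M) = mat_zero}"

definition Sp_grp :: "nat \<Rightarrow> nat \<Rightarrow> mat set" where
  "Sp_grp p g = {X. is_mat p (2*g) X \<and>
     mat_mul p (2*g) (mat_trans (2*g) X) (mat_mul p (2*g) (J_mat p g) X) = J_mat p g}"

text \<open>Generators of the relations defining the coinvariants of the integral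
  exterior square \<wedge>^2 sp_2g(p) (= H_2 of the abelian group sp_2g(p)) under
  the conjugation action of Sp(2g,Z/pZ).  A pair (M,N) stands for M \<wedge> N.\<close>
definition coinv_rels :: "nat \<Rightarrow> nat \<Rightarrow> (mat \<times> mat \<Rightarrow>\<^sub>0 int) set" where
  "coinv_rels p g =
     {frag_of (mat_add p (2*g) M M', N) - frag_of (M, N) - frag_of (M', N)
        | M M' N. M \<in> sp_lie p g \<and> M' \<in> sp_lie p g \<and> N \<in> sp_lie p g}
   \<union> {frag_of (M, mat_add p (2*g) N N') - frag_of (M, N) - frag_of (M, N')
        | M N N'. M \<in> sp_lie p g \<and> N \<in> sp_lie p g \<and> N' \<in> sp_lie p g}
   \<union> {frag_of (M, M) | M. M \<in> sp_lie p g}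
   \<union> {frag_of (mat_mul p (2*g) X (mat_mul p (2*g) M Y),
               mat_mul p (2*g) X (mat_mul p (2*g) N Y)) - frag_of (M, N)
        | X Y M N. X \<in> Sp_grp p g \<and> is_mat p (2*g) Y \<and>
                   mat_mul p (2*g) X Y = mat_one (2*g) \<and>
                   M \<in> sp_lie p g \<and> N \<in> sp_lie p g}"

definition H2_coinv :: "nat \<Rightarrow> nat \<Rightarrow> (mat \<times> mat \<Rightarrow>\<^sub>0 int) set monoid" where
  "H2_coinv p g =
     free_Abelian_group (sp_lie p g \<times> sp_lie p g)
       Mod generate (free_Abelian_group (sp_lie p g \<times> sp_lie p g)) (coinv_rels p g)"

end

theory Submission
  imports Defs "HOL-Library.Function_Algebras"
begin


definition red :: "nat \<Rightarrow> nat \<Rightarrow> mat \<Rightarrow> mat" where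
 "red p n A = (\<lambda>i j. if i < n \<and> j < n then A i j mod int p else 0)"
definition mm :: "nat \<Rightarrow> mat \<Rightarrow> mat \<Rightarrow> mat" where
 "mm n A B = (\<lambda>i j. \<Sum>k<n. A i k * B k j)"
definition mc :: "nat \<Rightarrow> nat \<Rightarrow> mat \<Rightarrow> mat \<Rightarrow> bool" where
 "mc p n A B \<longleftrightarrow> (\<forall>i<n. \<forall>j<n. A i j mod int p = B i j mod int p)"
definition tr :: "mat \<Rightarrow> mat" where "tr A = (\<lambda>i j. A j i)"
definition op :: "(nat\<Rightarrow>int) \<Rightarrow> (nat\<Rightarrow>int) \<Rightarrow> mat" where "op u v = (\<lambda>i j. u i * v j)"
definition sc :: "int \<Rightarrow> mat \<Rightarrow> mat" where "sc c A = (\<lambda>i j. c * A i j)"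
definition Jm :: "nat \<Rightarrow> mat" where
  "Jm g = (\<lambda>i j. if i < g \<and> j = i + g then 1
                      else if g \<le> i \<and> i < 2*g \<and> j = i - g then -1 else 0)"
definition om :: "nat \<Rightarrow> (nat\<Rightarrow>int) \<Rightarrow> (nat\<Rightarrow>int) \<Rightarrow> int" where
 "om g u v = (\<Sum>i<g. u i * v (i+g) - u (i+g) * v i)"
definition rv :: "nat \<Rightarrow> (nat\<Rightarrow>int) \<Rightarrow> nat \<Rightarrow> int" where
 "rv g u = (\<lambda>j. if j < g then - u (j+g) else if j < 2*g then u (j-g) else 0)"
definition vm :: "nat \<Rightarrow> (nat\<Rightarrow>int) \<Rightarrow> mat \<Rightarrow> nat \<Rightarrow> int" where
  "vm n v B = (\<lambda>j. \<Sum>k<n. v k * B k j)"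
definition mv :: "nat \<Rightarrow> mat \<Rightarrow> (nat\<Rightarrow>int) \<Rightarrow> nat \<Rightarrow> int" where
  "mv n A u = (\<lambda>i. \<Sum>k<n. A i k * u k)"
definition vc :: "nat \<Rightarrow> nat \<Rightarrow> (nat\<Rightarrow>int) \<Rightarrow> (nat\<Rightarrow>int) \<Rightarrow> bool" where
 "vc p n u v \<longleftrightarrow> (\<forall>i<n. u i mod int p = v i mod int p)"
definition sv :: "int \<Rightarrow> (nat \<Rightarrow> int) \<Rightarrow> nat \<Rightarrow> int" where "sv c u = (\<lambda>i. c * u i)"

lemma mc_refl[simp]: "mc p n A A" by (simp add: mc_def)
lemma mc_sym: "mc p n A B \<Longrightarrow> mc p n B A" by (simp add: mc_def)
lemma mc_trans: "mc p n A B \<Longrightarrow> mc p n B C \<Longrightarrow> mc p n A C" by (simp add: mc_def)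
lemma mc_add: "mc p n A A' \<Longrightarrow> mc p n B B' \<Longrightarrow> mc p n (A+B) (A'+B')"
  unfolding mc_def plus_fun_def by (metis mod_add_cong)
lemma mc_diff: "mc p n A A' \<Longrightarrow> mc p n B B' \<Longrightarrow> mc p n (A-B) (A'-B')"
  unfolding mc_def fun_diff_def by (metis mod_diff_cong)
lemma mc_sc: "mc p n A A' \<Longrightarrow> mc p n (sc c A) (sc c A')"
  unfolding mc_def sc_def by (metis mod_mult_cong)
lemma mc_red: "mc p n (red p n A) A" by (simp add: mc_def red_def)
lemma is_mat_red: "0 < p \<Longrightarrow> is_mat p n (red p n A)" by (simp add: is_mat_def red_def)
lemma mc_eq: assumes "is_mat p n A" "is_mat p n B" "mc p n A B" shows "A = B"
proof (intro ext)
  fix i j show "A i j = B i j"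
  proof (cases "i < n \<and> j < n")
    case True
    then have "A i j mod int p = A i j" "B i j mod int p = B i j"
      using assms(1,2) unfolding is_mat_def by auto
    then show ?thesis using assms(3) True unfolding mc_def by metis
  next
    case False then show ?thesis using assms(1,2) unfolding is_mat_def by auto
  qed
qed
lemma mat_mul_red: "mat_mul p n A B = red p n (mm n A B)" by (simp add: mat_mul_def red_def mm_def)
lemma mat_add_red: "mat_add p n A B = red p n (A + B)" by (simp add: mat_add_def red_def plus_fun_def)
lemma mc_mat_trans: "mc p n (mat_trans n A) (tr A)" by (simp add: mc_def mat_trans_def tr_def)

lemma mc_mm: assumes "mc p n A A'" "mc p n B B'" shows "mc p n (mm n A B) (mm n A' B')"
  unfolding mc_def mm_def
proof (intro allI impI)
  fix i j assume ij: "i < n" "j < n"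
  have "(\<Sum>k<n. A i k * B k j) mod int p = (\<Sum>k<n. A i k * B k j mod int p) mod int p"
    by (simp add: mod_sum_eq)
  also have "(\<Sum>k<n. A i k * B k j mod int p) = (\<Sum>k<n. A' i k * B' k j mod int p)"
  proof (rule sum.cong)
    fix k assume "k \<in> {..<n}"
    then have "A i k mod int p = A' i k mod int p" "B k j mod int p = B' k j mod int p"
      using assms ij unfolding mc_def by auto
    then show "A i k * B k j mod int p = A' i k * B' k j mod int p" by (metis mod_mult_cong)
  qed simp
  also have "(\<Sum>k<n. A' i k * B' k j mod int p) mod int p = (\<Sum>k<n. A' i k * B' k j) mod int p"
    by (simp add: mod_sum_eq)
  finally show "(\<Sum>k<n. A i k * B k j) mod int p = (\<Sum>k<n. A' i k * B' k j) mod int p" .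
qed

lemma mm_assoc: "mm n (mm n A B) C = mm n A (mm n B C)"
  unfolding mm_def by (auto simp: sum_distrib_left sum_distrib_right mult.assoc intro!: ext sum.swap[THEN trans])
lemma mm_add_left: "mm n (A + B) C = mm n A C + mm n B C"
  unfolding mm_def plus_fun_def by (auto simp: algebra_simps sum.distrib intro!: ext)
lemma mm_add_right: "mm n A (B + C) = mm n A B + mm n A C"
  unfolding mm_def plus_fun_def by (auto simp: algebra_simps sum.distrib intro!: ext)
lemma mm_diff_left: "mm n (A - B) C = mm n A C - mm n B C"
  unfolding mm_def fun_diff_def by (auto simp: algebra_simps sum_subtractf intro!: ext)
lemma mm_diff_right: "mm n A (B - C) = mm n A B - mm n A C"
  unfolding mm_def fun_diff_def by (auto simp: algebra_simps sum_subtractf intro!: ext)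
lemma mm_sc_left: "mm n (sc c A) B = sc c (mm n A B)"
  unfolding mm_def sc_def by (auto simp: sum_distrib_left mult.assoc intro!: ext)
lemma mm_sc_right: "mm n A (sc c B) = sc c (mm n A B)"
  unfolding mm_def sc_def by (auto simp: sum_distrib_left algebra_simps intro!: ext)
lemma mm_op_left: "mm n (op u v) B = op u (vm n v B)"
  unfolding mm_def op_def vm_def by (auto simp: sum_distrib_left mult.assoc intro!: ext)
lemma mm_op_right: "mm n A (op u v) = op (mv n A u) v"
  unfolding mm_def op_def mv_def by (auto simp: sum_distrib_right mult.assoc intro!: ext)
lemma op_op: "mm n (op a b) (op c d) = sc (\<Sum>k<n. b k * c k) (op a d)"
  unfolding mm_def op_def sc_def by (auto simp: sum_distrib_left sum_distrib_right algebra_simps intro!: ext)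
lemma tr_add: "tr (A + B) = tr A + tr B" by (simp add: tr_def plus_fun_def)
lemma tr_diff: "tr (A - B) = tr A - tr B" by (simp add: tr_def fun_diff_def)
lemma tr_sc: "tr (sc c A) = sc c (tr A)" by (simp add: tr_def sc_def)
lemma tr_op: "tr (op u v) = op v u" by (auto simp: tr_def op_def intro!: ext)
lemma tr_mm: "tr (mm n A B) = mm n (tr B) (tr A)" by (auto simp: tr_def mm_def mult.commute intro!: ext)
lemma tr_tr[simp]: "tr (tr A) = A" by (simp add: tr_def)
lemma mc_tr: "mc p n A B \<Longrightarrow> mc p n (tr A) (tr B)" by (simp add: mc_def tr_def)
lemma sc_add: "sc c (A + B) = sc c A + sc c B" by (auto simp: sc_def plus_fun_def algebra_simps)
lemma sc_sc: "sc c (sc d A) = sc (c*d) A" by (auto simp: sc_def mult.assoc)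
lemma sc_op: "sc c (op u v) = op (sv c u) v" by (auto simp: sc_def op_def sv_def mult.assoc)

lemma I_left: "mc p n (mm n (mat_one n) A) A"
proof -
  have "i < n \<Longrightarrow> (\<Sum>k<n. (if i < n \<and> k < n \<and> i = k then 1 else 0) * A k j) = A i j" for i j
    by (simp add: if_distrib[of "\<lambda>x. x * _"] sum.delta cong: if_cong)
  then show ?thesis unfolding mc_def mm_def mat_one_def by auto
qed
lemma I_right: "mc p n (mm n A (mat_one n)) A"
proof -
  have "j < n \<Longrightarrow> (\<Sum>k<n. A i k * (if k < n \<and> j < n \<and> k = j then 1 else 0)) = A i j" for i j
    by (simp add: if_distrib[of "\<lambda>x. _ * x"] sum.delta' cong: if_cong)
  then show ?thesis unfolding mc_def mm_def mat_one_def by auto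
qed

lemma sum_split2: "(\<Sum>j<2*(g::nat). (f j::int)) = (\<Sum>j<g. f j) + (\<Sum>j<g. f (j+g))"
proof -
  have "{..<2*g} = {..<g} \<union> {g..<2*g}" by auto
  then have "(\<Sum>j<2*g. f j) = sum f ({..<g} \<union> {g..<2*g})" by simp
  also have "\<dots> = (\<Sum>j<g. f j) + (\<Sum>j\<in>{g..<2*g}. f j)"
    by (rule sum.union_disjoint) auto
  also have "(\<Sum>j\<in>{g..<2*g}. f j) = (\<Sum>j\<in>{0+g..<g+g}. f j)" by (simp add: mult_2)
  also have "\<dots> = (\<Sum>j\<in>{0..<g}. f (j+g))" by (rule sum.shift_bounds_nat_ivl)
  finally show ?thesis by (simp add: lessThan_atLeast0)
qed

lemma vm_J: "j < 2*g \<Longrightarrow> vm (2*g) v (Jm g) j = rv g v j"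
proof (cases "j < g")
  case True
  assume j: "j < 2*g"
  have "vm (2*g) v (Jm g) j = (\<Sum>k<2*g. v k * (if k = j+g then -1 else 0))"
    unfolding vm_def Jm_def using True by (intro sum.cong) auto
  also have "\<dots> = - v (j+g)" using True
    by (simp add: if_distrib[of "\<lambda>x. _ * x"] sum.delta' cong: if_cong)
  finally show ?thesis using True by (simp add: rv_def)
next
  case False
  assume j: "j < 2*g"
  have "vm (2*g) v (Jm g) j = (\<Sum>k<2*g. v k * (if k = j-g then 1 else 0))"
    unfolding vm_def Jm_def using False j by (intro sum.cong) auto
  also have "\<dots> = v (j-g)" using False j
    by (simp add: if_distrib[of "\<lambda>x. _ * x"] sum.delta' cong: if_cong)
  finally show ?thesis using False j by (simp add: rv_def)
qed

lemma mv_J: "i < 2*g \<Longrightarrow> mv (2*g) (Jm g) u i = - rv g u i"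
proof (cases "i < g")
  case True
  have "mv (2*g) (Jm g) u i = (\<Sum>k<2*g. (if k = i+g then 1 else 0) * u k)"
    unfolding mv_def Jm_def using True by (intro sum.cong) auto
  also have "\<dots> = u (i+g)" using True
    by (simp add: if_distrib[of "\<lambda>x. x * _"] sum.delta cong: if_cong)
  finally show ?thesis using True by (simp add: rv_def)
next
  case False
  assume i: "i < 2*g"
  have "mv (2*g) (Jm g) u i = (\<Sum>k<2*g. (if k = i-g then -1 else 0) * u k)"
    unfolding mv_def Jm_def using False i by (intro sum.cong) auto
  also have "\<dots> = - u (i-g)" using False i
    by (simp add: if_distrib[of "\<lambda>x. x * _"] sum.delta cong: if_cong)
  finally show ?thesis using False i by (simp add: rv_def)
qed

lemma om_rv: "om g u v = (\<Sum>j<2*g. rv g u j * v j)"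
  unfolding om_def sum_split2 by (simp add: rv_def sum_subtractf[symmetric] sum.distrib[symmetric] algebra_simps)

lemma om_vm: "om g u v = (\<Sum>j<2*g. vm (2*g) u (Jm g) j * v j)"
  unfolding om_rv by (intro sum.cong) (auto simp: vm_J)

lemma om_anti: "om g u v = - om g v u"
  unfolding om_def by (simp add: sum_negf[symmetric] algebra_simps)
lemma om_self[simp]: "om g u u = 0"
  using om_anti[of g u u] by simp
lemma om_add_left: "om g (u + v) w = om g u w + om g v w"
  unfolding om_def plus_fun_def by (simp add: sum.distrib[symmetric] algebra_simps)
lemma om_add_right: "om g w (u + v) = om g w u + om g w v"
  unfolding om_def plus_fun_def by (simp add: sum.distrib[symmetric] algebra_simps)
lemma om_diff_left: "om g (u - v) w = om g u w - om g v w"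
  unfolding om_def fun_diff_def by (simp add: sum_subtractf[symmetric] algebra_simps)
lemma om_diff_right: "om g w (u - v) = om g w u - om g w v"
  unfolding om_def fun_diff_def by (simp add: sum_subtractf[symmetric] algebra_simps)
lemma om_sv_left: "om g (sv c u) w = c * om g u w"
  unfolding om_def sv_def by (simp add: sum_distrib_left algebra_simps)
lemma om_sv_right: "om g w (sv c u) = c * om g w u"
  unfolding om_def sv_def by (simp add: sum_distrib_left algebra_simps)
lemma om_vc: assumes "vc p (2*g) u u'" "vc p (2*g) v v'"
  shows "om g u v mod int p = om g u' v' mod int p"
proof -
  have "(\<Sum>i<g. u i * v (i+g) - u (i+g) * v i) mod int p
       = (\<Sum>i<g. (u i * v (i+g) - u (i+g) * v i) mod int p) mod int p" by (simp add: mod_sum_eq)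
  also have "(\<Sum>i<g. (u i * v (i+g) - u (i+g) * v i) mod int p)
           = (\<Sum>i<g. (u' i * v' (i+g) - u' (i+g) * v' i) mod int p)"
  proof (rule sum.cong)
    fix i assume "i \<in> {..<g}"
    then have "u i mod int p = u' i mod int p" "v (i+g) mod int p = v' (i+g) mod int p"
      "u (i+g) mod int p = u' (i+g) mod int p" "v i mod int p = v' i mod int p"
      using assms unfolding vc_def by auto
    then show "(u i * v (i+g) - u (i+g) * v i) mod int p = (u' i * v' (i+g) - u' (i+g) * v' i) mod int p"
      by (metis mod_diff_cong mod_mult_cong)
  qed simp
  also have "(\<Sum>i<g. (u' i * v' (i+g) - u' (i+g) * v' i) mod int p) mod int p
      = (\<Sum>i<g. u' i * v' (i+g) - u' (i+g) * v' i) mod int p" by (simp add: mod_sum_eq)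
  finally show ?thesis unfolding om_def .
qed

lemma J_mat_eq: "J_mat p g = (\<lambda>i j. Jm g i j mod int p)"
  by (auto simp: J_mat_def Jm_def intro!: ext)
lemma mc_J: "mc p (2*g) (J_mat p g) (Jm g)" by (simp add: mc_def J_mat_eq)
lemma is_mat_J: "1 < p \<Longrightarrow> is_mat p (2*g) (J_mat p g)"
  by (auto simp: is_mat_def J_mat_eq Jm_def)
lemma is_mat_one: assumes "1 < p" shows "is_mat p n (mat_one n)"
  using assms by (auto simp: is_mat_def mat_one_def)
lemma is_mat_zero: "0 < p \<Longrightarrow> is_mat p n mat_zero"
  by (auto simp: is_mat_def mat_zero_def)
lemma tr_J: "tr (Jm g) = sc (-1) (Jm g)"
  by (auto simp: tr_def sc_def Jm_def intro!: ext)
lemma JJ: "mc p (2*g) (mm (2*g) (Jm g) (Jm g)) (sc (-1) (mat_one (2*g)))"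
proof -
  have "i < 2*g \<Longrightarrow> mm (2*g) (Jm g) (Jm g) i j = - rv g (\<lambda>k. Jm g k j) i" for i j
    using mv_J[of i g "\<lambda>k. Jm g k j"] by (simp add: mm_def mv_def)
  then have "i < 2*g \<Longrightarrow> j < 2*g \<Longrightarrow> mm (2*g) (Jm g) (Jm g) i j = sc (-1) (mat_one (2*g)) i j" for i j
    by (auto simp: rv_def Jm_def sc_def mat_one_def)
  then show ?thesis by (simp add: mc_def)
qed
lemma mat_zero_eq: "mat_zero = 0" by (auto simp: mat_zero_def zero_fun_def)
lemma red_zero_iff: "0 < p \<Longrightarrow> red p n X = 0 \<longleftrightarrow> mc p n X 0"
proof
  assume "red p n X = 0" then show "mc p n X 0" using mc_red[of p n X] by (simp add: mc_sym)
next
  assume a: "0 < p" "mc p n X 0"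
  show "red p n X = 0"
    by (rule mc_eq[of p n]) (use a is_mat_red[of p n X] is_mat_zero[of p n] mc_red[of p n X] in
         \<open>auto simp: mat_zero_eq intro: mc_trans\<close>)
qed

lemma sp_iff: assumes "1 < p"
  shows "M \<in> sp_lie p g \<longleftrightarrow> is_mat p (2*g) M \<and>
     mc p (2*g) (mm (2*g) (tr M) (Jm g) + mm (2*g) (Jm g) M) 0"
proof -
  have e: "mat_add p (2*g) (mat_mul p (2*g) (mat_trans (2*g) M) (J_mat p g)) (mat_mul p (2*g) (J_mat p g) M)
        = red p (2*g) (red p (2*g) (mm (2*g) (mat_trans (2*g) M) (J_mat p g)) + red p (2*g) (mm (2*g) (J_mat p g) M))"
    by (simp add: mat_add_red mat_mul_red)
  have c: "mc p (2*g) (red p (2*g) (mm (2*g) (mat_trans (2*g) M) (J_mat p g)) + red p (2*g) (mm (2*g) (J_mat p g) M))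
      (mm (2*g) (tr M) (Jm g) + mm (2*g) (Jm g) M)"
    by (intro mc_add mc_trans[OF mc_red] mc_mm mc_mat_trans mc_J mc_refl)
  have "mc p (2*g) (red p (2*g) (mm (2*g) (mat_trans (2*g) M) (J_mat p g)) + red p (2*g) (mm (2*g) (J_mat p g) M)) 0
     \<longleftrightarrow> mc p (2*g) (mm (2*g) (tr M) (Jm g) + mm (2*g) (Jm g) M) 0"
    using c by (meson mc_sym mc_trans)
  moreover have "red p (2*g) (red p (2*g) (mm (2*g) (mat_trans (2*g) M) (J_mat p g)) + red p (2*g) (mm (2*g) (J_mat p g) M)) = 0
     \<longleftrightarrow> mc p (2*g) (red p (2*g) (mm (2*g) (mat_trans (2*g) M) (J_mat p g)) + red p (2*g) (mm (2*g) (J_mat p g) M)) 0"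
    using assms by (intro red_zero_iff) auto
  ultimately show ?thesis unfolding sp_lie_def mem_Collect_eq e mat_zero_eq by blast
qed

lemma Sp_iff: assumes "1 < p"
  shows "X \<in> Sp_grp p g \<longleftrightarrow> is_mat p (2*g) X \<and> mc p (2*g) (mm (2*g) (tr X) (mm (2*g) (Jm g) X)) (Jm g)"
proof -
  have c: "mc p (2*g) (mat_mul p (2*g) (mat_trans (2*g) X) (mat_mul p (2*g) (J_mat p g) X))
           (mm (2*g) (tr X) (mm (2*g) (Jm g) X))"
    unfolding mat_mul_red
    by (intro mc_trans[OF mc_red] mc_mm mc_mat_trans mc_J mc_refl)
  have im: "is_mat p (2*g) (mat_mul p (2*g) (mat_trans (2*g) X) (mat_mul p (2*g) (J_mat p g) X))"
    using assms by (simp add: mat_mul_red is_mat_red)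
  show ?thesis unfolding Sp_grp_def
  proof (safe)
    assume "mat_mul p (2*g) (mat_trans (2*g) X) (mat_mul p (2*g) (J_mat p g) X) = J_mat p g"
    then show "mc p (2*g) (mm (2*g) (tr X) (mm (2*g) (Jm g) X)) (Jm g)"
      using c mc_J by (metis mc_sym mc_trans)
  next
    assume "mc p (2*g) (mm (2*g) (tr X) (mm (2*g) (Jm g) X)) (Jm g)"
    then show "mat_mul p (2*g) (mat_trans (2*g) X) (mat_mul p (2*g) (J_mat p g) X) = J_mat p g"
      using c mc_J im is_mat_J[OF assms] by (metis mc_eq mc_sym mc_trans)
  qed
qed




definition ee :: "nat \<Rightarrow> nat \<Rightarrow> int" where "ee k = (\<lambda>i. if i = k then 1 else 0)"
definition Mv :: "nat \<Rightarrow> nat \<Rightarrow> (nat \<Rightarrow> int) \<Rightarrow> mat" where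
  "Mv p g u = red p (2*g) (op u (rv g u))"
definition Nv :: "nat \<Rightarrow> nat \<Rightarrow> (nat \<Rightarrow> int) \<Rightarrow> (nat \<Rightarrow> int) \<Rightarrow> mat" where
  "Nv p g u v = red p (2*g) (op u (rv g v) + op v (rv g u))"
definition km :: "nat \<Rightarrow> nat \<Rightarrow> nat \<Rightarrow> mat \<Rightarrow> mat" where
  "km p n k A = red p n (sc (int k) A)"

lemma vc_refl[simp]: "vc p n u u" by (simp add: vc_def)
lemma vc_sym: "vc p n u v \<Longrightarrow> vc p n v u" by (simp add: vc_def)
lemma vc_trans: "vc p n u v \<Longrightarrow> vc p n v w \<Longrightarrow> vc p n u w" by (simp add: vc_def)
lemma vc_add: "vc p n u u' \<Longrightarrow> vc p n v v' \<Longrightarrow> vc p n (u+v) (u'+v')"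
  unfolding vc_def plus_fun_def by (metis mod_add_cong)
lemma vc_diff: "vc p n u u' \<Longrightarrow> vc p n v v' \<Longrightarrow> vc p n (u-v) (u'-v')"
  unfolding vc_def fun_diff_def by (metis mod_diff_cong)
lemma vc_sv: "vc p n u u' \<Longrightarrow> vc p n (sv c u) (sv c u')"
  unfolding vc_def sv_def by (metis mod_mult_cong)
lemma vc_sv_cong: "c mod int p = d mod int p \<Longrightarrow> vc p n (sv c u) (sv d u)"
  unfolding vc_def sv_def by (metis mod_mult_cong)
lemma mc_op: "vc p n u u' \<Longrightarrow> vc p n v v' \<Longrightarrow> mc p n (op u v) (op u' v')"
  unfolding vc_def mc_def op_def by (metis mod_mult_cong)
lemma vc_rv: "vc p (2*g) u u' \<Longrightarrow> vc p (2*g) (rv g u) (rv g u')"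
  unfolding vc_def rv_def by (auto intro: mod_minus_cong)
lemma vc_vm_J: "vc p (2*g) (vm (2*g) b (Jm g)) (rv g b)"
  by (simp add: vc_def vm_J)
lemma vc_mv_J: "vc p (2*g) (mv (2*g) (Jm g) b) (sv (-1) (rv g b))"
  by (simp add: vc_def mv_J sv_def)
lemma rv_add: "rv g (u + v) = rv g u + rv g v" by (auto simp: rv_def plus_fun_def)
lemma rv_diff: "rv g (u - v) = rv g u - rv g v" by (auto simp: rv_def fun_diff_def)
lemma rv_sv: "rv g (sv c u) = sv c (rv g u)" by (auto simp: rv_def sv_def)
lemma op_add_left: "op (u + v) w = op u w + op v w" by (auto simp: op_def plus_fun_def algebra_simps)
lemma op_add_right: "op w (u + v) = op w u + op w v" by (auto simp: op_def plus_fun_def algebra_simps)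
lemma op_sv_right: "op u (sv c v) = sc c (op u v)" by (auto simp: op_def sv_def sc_def algebra_simps)
lemma op_sv_left: "op (sv c u) v = sc c (op u v)" by (auto simp: op_def sv_def sc_def algebra_simps)
lemma mc_red_iff: "mc p n (red p n A) B \<longleftrightarrow> mc p n A B"
  by (simp add: mc_def red_def)
lemma red_cong: assumes "0 < p" "mc p n A B" shows "red p n A = red p n B"
proof (rule mc_eq[of p n])
  show "mc p n (red p n A) (red p n B)" using assms(2) mc_red[of p n A] mc_red[of p n B]
    by (meson mc_sym mc_trans)
qed (use assms is_mat_red in auto)

lemma mm_Q_J: "mc p (2*g) (mm (2*g) (op a b) (Jm g)) (op a (rv g b))"
  unfolding mm_op_left by (intro mc_op vc_refl vc_vm_J)

lemma sp_Q: "mc p (2*g) (mm (2*g) (tr (op a (rv g b))) (Jm g) + mm (2*g) (Jm g) (op a (rv g b)))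
     (op (rv g b) (rv g a) - op (rv g a) (rv g b))"
proof -
  have "mc p (2*g) (mm (2*g) (tr (op a (rv g b))) (Jm g) + mm (2*g) (Jm g) (op a (rv g b)))
     (op (rv g b) (rv g a) + op (sv (-1) (rv g a)) (rv g b))"
    unfolding tr_op mm_op_left mm_op_right
    by (intro mc_add mc_op vc_refl vc_vm_J vc_mv_J)
  moreover have "op (rv g b) (rv g a) + op (sv (-1) (rv g a)) (rv g b) = op (rv g b) (rv g a) - op (rv g a) (rv g b)"
    by (auto simp: op_def sv_def plus_fun_def fun_diff_def)
  ultimately show ?thesis by simp
qed

lemma Mv_sp: assumes "1 < p" shows "Mv p g u \<in> sp_lie p g"
proof -
  have "mc p (2*g) (mm (2*g) (tr (Mv p g u)) (Jm g) + mm (2*g) (Jm g) (Mv p g u))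
     (mm (2*g) (tr (op u (rv g u))) (Jm g) + mm (2*g) (Jm g) (op u (rv g u)))"
    unfolding Mv_def by (intro mc_add mc_mm mc_tr mc_red mc_refl)
  then have "mc p (2*g) (mm (2*g) (tr (Mv p g u)) (Jm g) + mm (2*g) (Jm g) (Mv p g u)) (op (rv g u) (rv g u) - op (rv g u) (rv g u))"
    using sp_Q by (rule mc_trans)
  then show ?thesis using assms by (auto simp: sp_iff Mv_def is_mat_red)
qed
lemma mc_mmL: "mc p n A A' \<Longrightarrow> mc p n (mm n A B) (mm n A' B)" by (intro mc_mm mc_refl)
lemma mc_mmR: "mc p n B B' \<Longrightarrow> mc p n (mm n A B) (mm n A B')" by (intro mc_mm mc_refl)
lemma sc_one[simp]: "sc 1 A = A" by (simp add: sc_def)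
lemma mm_zero_left[simp]: "mm n 0 A = 0" by (auto simp: mm_def zero_fun_def)
lemma mm_zero_right[simp]: "mm n A 0 = 0" by (auto simp: mm_def zero_fun_def)
lemma mc_sc_cong: "c mod int p = d mod int p \<Longrightarrow> mc p n (sc c A) (sc d A)"
  unfolding mc_def sc_def by (metis mod_mult_cong)
lemma mc_neg_sum: assumes "mc p n (sc (-1) X + sc (-1) Y) 0" shows "mc p n X (sc (-1) Y)"
  unfolding mc_def
proof (intro allI impI)
  fix i j assume "i < n" "j < n"
  then have "(- X i j - Y i j) mod int p = 0" using assms by (simp add: mc_def sc_def plus_fun_def)
  then have "int p dvd (- X i j - Y i j)" by (simp add: mod_eq_0_iff_dvd)
  then have "int p dvd (X i j - (- Y i j))" by (metis dvd_minus_iff minus_diff_eq diff_minus_eq_add add.commute)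
  then show "X i j mod int p = sc (- 1) Y i j mod int p" by (simp add: sc_def mod_eq_dvd_iff)
qed

lemma Nv_sym: "Nv p g u v = Nv p g v u" by (simp add: Nv_def add.commute)

lemma Nv_sp: assumes "1 < p" shows "Nv p g u v \<in> sp_lie p g"
proof -
  have "mc p (2*g) (mm (2*g) (tr (Nv p g u v)) (Jm g) + mm (2*g) (Jm g) (Nv p g u v))
     ((mm (2*g) (tr (op u (rv g v))) (Jm g) + mm (2*g) (Jm g) (op u (rv g v))) +
      (mm (2*g) (tr (op v (rv g u))) (Jm g) + mm (2*g) (Jm g) (op v (rv g u))))"
  proof -
    have "mc p (2*g) (mm (2*g) (tr (Nv p g u v)) (Jm g) + mm (2*g) (Jm g) (Nv p g u v))
       (mm (2*g) (tr (op u (rv g v) + op v (rv g u))) (Jm g) + mm (2*g) (Jm g) (op u (rv g v) + op v (rv g u)))"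
      unfolding Nv_def by (intro mc_add mc_mm mc_tr mc_red mc_refl)
    then show ?thesis by (simp add: tr_add mm_add_left mm_add_right algebra_simps)
  qed
  then have "mc p (2*g) (mm (2*g) (tr (Nv p g u v)) (Jm g) + mm (2*g) (Jm g) (Nv p g u v))
     ((op (rv g v) (rv g u) - op (rv g u) (rv g v)) + (op (rv g u) (rv g v) - op (rv g v) (rv g u)))"
    using mc_add[OF sp_Q sp_Q] mc_trans by blast
  then show ?thesis using assms by (auto simp: sp_iff Nv_def is_mat_red)
qed

lemma sp_add: assumes "1 < p" "A \<in> sp_lie p g" "B \<in> sp_lie p g" shows "mat_add p (2*g) A B \<in> sp_lie p g"
proof -
  have a: "mc p (2*g) (mm (2*g) (tr A) (Jm g) + mm (2*g) (Jm g) A) 0"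
   and b: "mc p (2*g) (mm (2*g) (tr B) (Jm g) + mm (2*g) (Jm g) B) 0" using assms by (auto simp: sp_iff)
  have "mc p (2*g) (mm (2*g) (tr (mat_add p (2*g) A B)) (Jm g) + mm (2*g) (Jm g) (mat_add p (2*g) A B))
      (mm (2*g) (tr (A+B)) (Jm g) + mm (2*g) (Jm g) (A+B))"
    unfolding mat_add_red by (intro mc_add mc_mm mc_tr mc_red mc_refl)
  also have "(mm (2*g) (tr (A+B)) (Jm g) + mm (2*g) (Jm g) (A+B)) =
     (mm (2*g) (tr A) (Jm g) + mm (2*g) (Jm g) A) + (mm (2*g) (tr B) (Jm g) + mm (2*g) (Jm g) B)"
    by (simp add: tr_add mm_add_left mm_add_right algebra_simps)
  finally have "mc p (2*g) (mm (2*g) (tr (mat_add p (2*g) A B)) (Jm g) + mm (2*g) (Jm g) (mat_add p (2*g) A B)) (0+0)"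
    using mc_add[OF a b] mc_trans by blast
  then show ?thesis using assms by (auto simp: sp_iff mat_add_red is_mat_red)
qed

lemma zero_sp: "1 < p \<Longrightarrow> 0 \<in> sp_lie p g"
  by (auto simp: sp_iff is_mat_def tr_def zero_fun_def mc_def mm_def)

lemma Mv_zero: "Mv p g 0 = 0" by (auto simp: Mv_def red_def op_def zero_fun_def intro!: ext)

lemma km_0: "km p n 0 A = 0" by (auto simp: km_def red_def sc_def zero_fun_def intro!: ext)
lemma km_Suc: "0 < p \<Longrightarrow> km p n (Suc k) A = mat_add p n (km p n k A) A"
  unfolding km_def mat_add_red
  by (rule red_cong) (auto simp: mc_def red_def sc_def plus_fun_def algebra_simps mod_add_left_eq mod_add_right_eq)

lemma km_P: assumes "1 < p" "P 0" "\<And>A B. A \<in> sp_lie p g \<Longrightarrow> B \<in> sp_lie p g \<Longrightarrow> P A \<Longrightarrow> P B \<Longrightarrow> P (mat_add p (2*g) A B)"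
  "A \<in> sp_lie p g" "P A"
  shows "km p (2*g) k A \<in> sp_lie p g \<and> P (km p (2*g) k A)"
proof (induction k)
  case 0 show ?case by (simp only: km_0) (use assms zero_sp in blast)
next
  case (Suc k) then show ?case using assms by (simp add: km_Suc sp_add)
qed
lemma mat_add_mc: "mc p n (mat_add p n A B) (A + B)" unfolding mat_add_red by (rule mc_red)
lemma Mv_mc: "mc p (2*g) (Mv p g u) (op u (rv g u))" unfolding Mv_def by (rule mc_red)
lemma Nv_mc: "mc p (2*g) (Nv p g u v) (op u (rv g v) + op v (rv g u))" unfolding Nv_def by (rule mc_red)
lemma km_mc: "mc p n (km p n k A) (sc (int k) A)" unfolding km_def by (rule mc_red)

lemma Nv_decomp: assumes "1 < p"
  shows "Nv p g a b = mat_add p (2*g) (Mv p g (a+b)) (mat_add p (2*g) (km p (2*g) (p-1) (Mv p g a)) (km p (2*g) (p-1) (Mv p g b)))"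
proof (rule mc_eq[of p "2*g"])
  show "is_mat p (2*g) (Nv p g a b)" using assms by (simp add: Nv_def is_mat_red)
  show "is_mat p (2*g) (mat_add p (2*g) (Mv p g (a+b)) (mat_add p (2*g) (km p (2*g) (p-1) (Mv p g a)) (km p (2*g) (p-1) (Mv p g b))))"
    using assms by (simp add: mat_add_red is_mat_red)
  have r: "mc p (2*g) (mat_add p (2*g) (Mv p g (a+b)) (mat_add p (2*g) (km p (2*g) (p-1) (Mv p g a)) (km p (2*g) (p-1) (Mv p g b))))
     (op (a+b) (rv g (a+b)) + (sc (int (p-1)) (op a (rv g a)) + sc (int (p-1)) (op b (rv g b))))"
    by (rule mc_trans[OF mat_add_mc]) (intro mc_add Mv_mc mc_trans[OF mat_add_mc] mc_trans[OF km_mc] mc_sc)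
  have e: "mc p (2*g) (op a (rv g b) + op b (rv g a))
     (op (a+b) (rv g (a+b)) + (sc (int (p-1)) (op a (rv g a)) + sc (int (p-1)) (op b (rv g b))))"
    unfolding mc_def
  proof (intro allI impI)
    fix i j
    have "(op (a+b) (rv g (a+b)) + (sc (int (p-1)) (op a (rv g a)) + sc (int (p-1)) (op b (rv g b)))) i j
       = (op a (rv g b) + op b (rv g a)) i j + int p * (a i * rv g a j + b i * rv g b j)"
      using assms by (simp add: op_def sc_def rv_def plus_fun_def of_nat_diff algebra_simps)
    then show "(op a (rv g b) + op b (rv g a)) i j mod int p =
        (op (a+b) (rv g (a+b)) + (sc (int (p-1)) (op a (rv g a)) + sc (int (p-1)) (op b (rv g b)))) i j mod int p"
      by simp
  qed
  show "mc p (2*g) (Nv p g a b) (mat_add p (2*g) (Mv p g (a+b)) (mat_add p (2*g) (km p (2*g) (p-1) (Mv p g a)) (km p (2*g) (p-1) (Mv p g b))))"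
    using mc_trans[OF Nv_mc e] r mc_sym mc_trans by blast
qed

lemma P_Nv: assumes "1 < p" "\<And>u. P (Mv p g u)"
   "\<And>A B. A \<in> sp_lie p g \<Longrightarrow> B \<in> sp_lie p g \<Longrightarrow> P A \<Longrightarrow> P B \<Longrightarrow> P (mat_add p (2*g) A B)"
  shows "P (Nv p g a b)"
proof -
  have z: "P 0" using assms(2)[of 0] by (simp add: Mv_zero)
  have k: "km p (2*g) k (Mv p g u) \<in> sp_lie p g \<and> P (km p (2*g) k (Mv p g u))" for k u
    by (rule km_P[where P=P, OF assms(1) z]) (use assms Mv_sp in auto)
  show ?thesis unfolding Nv_decomp[OF assms(1)]
    using assms k Mv_sp sp_add by metis
qed
declare mc_trans[trans]
lemma eq_mc: "A = B \<Longrightarrow> mc p n A B" by simp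

definition SS :: "nat \<Rightarrow> mat \<Rightarrow> mat" where "SS g M = sc (-1) (mm (2*g) M (Jm g))"

lemma SS_J: "mc p (2*g) (mm (2*g) (SS g M) (Jm g)) M"
proof -
  have "mc p (2*g) (mm (2*g) (SS g M) (Jm g)) (sc (-1) (mm (2*g) M (mm (2*g) (Jm g) (Jm g))))"
    by (rule eq_mc) (simp add: SS_def mm_sc_left mm_assoc)
  also have "mc p (2*g) \<dots> (sc (-1) (mm (2*g) M (sc (-1) (mat_one (2*g)))))" by (intro mc_sc mc_mmR JJ)
  also have "mc p (2*g) \<dots> (mm (2*g) M (mat_one (2*g)))"
    by (rule eq_mc) (simp add: mm_sc_right sc_sc)
  also have "mc p (2*g) \<dots> M" by (rule I_right)
  finally show ?thesis .
qed

lemma SS_sym: assumes "1 < p" "M \<in> sp_lie p g" shows "mc p (2*g) (tr (SS g M)) (SS g M)"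
proof -
  let ?n = "2*g" and ?J = "Jm g"
  let ?E = "mm ?n (tr M) ?J + mm ?n ?J M"
  have E: "mc p ?n ?E 0" using assms by (simp add: sp_iff)
  have "mc p ?n (mm ?n ?J (mm ?n ?E ?J)) (mm ?n ?J (mm ?n (tr M) (mm ?n ?J ?J)) + mm ?n (mm ?n ?J ?J) (mm ?n M ?J))"
    by (rule eq_mc) (simp add: mm_add_left mm_add_right mm_assoc)
  also have "mc p ?n \<dots> (mm ?n ?J (mm ?n (tr M) (sc (-1) (mat_one ?n))) + mm ?n (sc (-1) (mat_one ?n)) (mm ?n M ?J))"
    by (intro mc_add mc_mmR mc_mmL JJ)
  also have "mc p ?n \<dots> (sc (-1) (mm ?n ?J (mm ?n (tr M) (mat_one ?n))) + sc (-1) (mm ?n (mat_one ?n) (mm ?n M ?J)))"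
    by (rule eq_mc) (simp add: mm_sc_left mm_sc_right)
  also have "mc p ?n \<dots> (sc (-1) (mm ?n ?J (tr M)) + sc (-1) (mm ?n M ?J))"
    by (intro mc_add mc_sc mc_mmR I_right I_left)
  finally have 1: "mc p ?n (mm ?n ?J (mm ?n ?E ?J)) (sc (-1) (mm ?n ?J (tr M)) + sc (-1) (mm ?n M ?J))" .
  have 2: "mc p ?n (mm ?n ?J (mm ?n ?E ?J)) 0"
    using mc_mmR[OF mc_mmL[OF E, of ?J], of ?J] by (simp add: mm_def zero_fun_def mc_def)
  have "mc p ?n (sc (-1) (mm ?n ?J (tr M)) + sc (-1) (mm ?n M ?J)) 0"
    using 1 2 by (meson mc_sym mc_trans)
  then have 3: "mc p ?n (mm ?n ?J (tr M)) (SS g M)" unfolding SS_def by (rule mc_neg_sum)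
  have "tr (SS g M) = mm ?n ?J (tr M)"
    by (simp add: SS_def tr_sc tr_mm tr_J mm_sc_left sc_sc)
  then show ?thesis using 3 by simp
qed

definition cc :: "mat \<Rightarrow> nat \<Rightarrow> nat \<Rightarrow> int" where "cc S i = (\<lambda>k. if i < k then S k i else 0)"
definition tm :: "mat \<Rightarrow> nat \<Rightarrow> mat" where
  "tm S i = op (ee i) (cc S i) + op (cc S i) (ee i) + sc (S i i) (op (ee i) (ee i))"
primrec Ps :: "mat \<Rightarrow> nat \<Rightarrow> mat" where
  "Ps S 0 = 0" | "Ps S (Suc k) = Ps S k + tm S k"

lemma Ps_entry: "Ps S k a b = (\<Sum>i<k. tm S i a b)"
  by (induction k) (auto simp: plus_fun_def zero_fun_def)

lemma Ps_full: assumes "mc p n (tr S) S" shows "mc p n (Ps S n) S"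
  unfolding mc_def
proof (intro allI impI)
  fix a b assume ab: "a < n" "b < n"
  have "Ps S n a b = (\<Sum>i<n. ee i a * cc S i b + cc S i a * ee i b + S i i * (ee i a * ee i b))"
    unfolding Ps_entry by (simp add: tm_def op_def sc_def plus_fun_def)
  also have "\<dots> = cc S a b + cc S b a + (if a = b then S a a else 0)"
    using ab by (simp add: sum.distrib ee_def if_distrib[of "\<lambda>x. x * _"] if_distrib[of "\<lambda>x. _ * x"] sum.delta sum.delta' cong: if_cong)
  finally have e: "Ps S n a b = cc S a b + cc S b a + (if a = b then S a a else 0)" .
  have s: "S b a mod int p = S a b mod int p" using assms ab by (auto simp: mc_def tr_def)
  show "Ps S n a b mod int p = S a b mod int p"
    unfolding e cc_def using s by (cases a b rule: linorder_cases) auto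
qed

lemma span: assumes "1 < p" "\<And>u. P (Mv p g u)"
   "\<And>A B. A \<in> sp_lie p g \<Longrightarrow> B \<in> sp_lie p g \<Longrightarrow> P A \<Longrightarrow> P B \<Longrightarrow> P (mat_add p (2*g) A B)"
   "M \<in> sp_lie p g"
  shows "P M"
proof -
  let ?n = "2*g" and ?J = "Jm g" and ?S = "SS g M"
  have p0: "0 < p" using assms by simp
  have z: "P 0" using assms(2)[of 0] by (simp add: Mv_zero)
  have T: "red p ?n (mm ?n (tm ?S k) ?J) = mat_add p ?n (Nv p g (ee k) (cc ?S k)) (km p ?n (nat (?S k k mod int p)) (Mv p g (ee k)))" for k
  proof -
    have "mc p ?n (mm ?n (tm ?S k) ?J) (mm ?n (op (ee k) (cc ?S k)) ?J + mm ?n (op (cc ?S k) (ee k)) ?J + sc (?S k k) (mm ?n (op (ee k) (ee k)) ?J))"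
      by (rule eq_mc) (simp add: tm_def mm_add_left mm_sc_left)
    also have "mc p ?n \<dots> (op (ee k) (rv g (cc ?S k)) + op (cc ?S k) (rv g (ee k)) + sc (int (nat (?S k k mod int p))) (op (ee k) (rv g (ee k))))"
      by (intro mc_add mm_Q_J mc_trans[OF mc_sc[OF mm_Q_J]] mc_sc_cong) (use p0 in simp)
    also have "mc p ?n \<dots> (mat_add p ?n (Nv p g (ee k) (cc ?S k)) (km p ?n (nat (?S k k mod int p)) (Mv p g (ee k))))"
      by (rule mc_sym, rule mc_trans[OF mat_add_mc]) (intro mc_add Nv_mc mc_trans[OF km_mc] mc_sc Mv_mc)
    finally have "mc p ?n (red p ?n (mm ?n (tm ?S k) ?J)) (mat_add p ?n (Nv p g (ee k) (cc ?S k)) (km p ?n (nat (?S k k mod int p)) (Mv p g (ee k))))"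
      by (simp add: mc_red_iff)
    then show ?thesis using p0 by (intro mc_eq[of p ?n]) (auto simp: is_mat_red mat_add_red)
  qed
  have TP: "red p ?n (mm ?n (tm ?S k) ?J) \<in> sp_lie p g \<and> P (red p ?n (mm ?n (tm ?S k) ?J))" for k
  proof -
    have "km p ?n m (Mv p g u) \<in> sp_lie p g \<and> P (km p ?n m (Mv p g u))" for m u
      by (rule km_P[where P=P, OF assms(1) z]) (use assms Mv_sp in auto)
    moreover have "P (Nv p g a b)" for a b by (rule P_Nv[where P=P]) (use assms in auto)
    ultimately show ?thesis unfolding T using assms Nv_sp sp_add by metis
  qed
  have step: "red p ?n (mm ?n (Ps ?S (Suc k)) ?J) = mat_add p ?n (red p ?n (mm ?n (Ps ?S k) ?J)) (red p ?n (mm ?n (tm ?S k) ?J))" for k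
    unfolding mat_add_red Ps.simps mm_add_left
    by (rule red_cong[OF p0]) (intro mc_sym[OF mc_add] mc_red)
  have I: "red p ?n (mm ?n (Ps ?S k) ?J) \<in> sp_lie p g \<and> P (red p ?n (mm ?n (Ps ?S k) ?J))" for k
  proof (induction k)
    case 0
    have "red p ?n (mm ?n (Ps ?S 0) ?J) = Mv p g 0" by (auto simp: red_def zero_fun_def mm_def Mv_def op_def intro!: ext)
    then show ?case using assms(2)[of 0] Mv_sp[OF assms(1), of g 0] by metis
  next
    case (Suc k) then show ?case unfolding step using TP assms(3) sp_add[OF assms(1)] by blast
  qed
  have "mc p ?n (red p ?n (mm ?n (Ps ?S ?n) ?J)) M"
  proof -
    have "mc p ?n (red p ?n (mm ?n (Ps ?S ?n) ?J)) (mm ?n (Ps ?S ?n) ?J)" by (rule mc_red)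
    also have "mc p ?n \<dots> (mm ?n ?S ?J)" by (intro mc_mmL Ps_full SS_sym assms)
    also have "mc p ?n \<dots> M" by (rule SS_J)
    finally show ?thesis .
  qed
  then have "red p ?n (mm ?n (Ps ?S ?n) ?J) = M"
    using p0 assms(1,4) by (intro mc_eq[of p ?n]) (auto simp: is_mat_red sp_iff)
  then show ?thesis using I by metis
qed



definition bil :: "nat \<Rightarrow> mat \<Rightarrow> (nat \<Rightarrow> int) \<Rightarrow> (nat \<Rightarrow> int) \<Rightarrow> int" where
  "bil n A u v = (\<Sum>i<n. \<Sum>k<n. u i * A i k * v k)"

lemma om_bil: "om g u v = bil (2*g) (Jm g) u v"
proof -
  have "om g u v = (\<Sum>j<2*g. \<Sum>k<2*g. u k * Jm g k j * v j)"
    by (simp add: om_vm vm_def sum_distrib_right)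
  also have "\<dots> = (\<Sum>k<2*g. \<Sum>j<2*g. u k * Jm g k j * v j)" by (rule sum.swap)
  finally show ?thesis by (simp add: bil_def)
qed

lemma bil_mv: "bil n A (mv n X u) (mv n X v) = bil n (mm n (tr X) (mm n A X)) u v"
proof -
  define F where "F i k a b = u a * X i a * A i k * X k b * v b" for i k a b
  have "bil n A (mv n X u) (mv n X v) = (\<Sum>i<n. \<Sum>k<n. \<Sum>a<n. \<Sum>b<n. F i k a b)"
    unfolding bil_def mv_def F_def
    by (simp add: sum_distrib_left sum_distrib_right algebra_simps)
  also have "\<dots> = (\<Sum>i<n. \<Sum>a<n. \<Sum>k<n. \<Sum>b<n. F i k a b)"
    by (rule sum.cong[OF refl], rule sum.swap)
  also have "\<dots> = (\<Sum>a<n. \<Sum>i<n. \<Sum>k<n. \<Sum>b<n. F i k a b)"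
    by (rule sum.swap)
  also have "\<dots> = (\<Sum>a<n. \<Sum>i<n. \<Sum>b<n. \<Sum>k<n. F i k a b)"
    by (rule sum.cong[OF refl], rule sum.cong[OF refl], rule sum.swap)
  also have "\<dots> = (\<Sum>a<n. \<Sum>b<n. \<Sum>i<n. \<Sum>k<n. F i k a b)"
    by (rule sum.cong[OF refl], rule sum.swap)
  also have "\<dots> = bil n (mm n (tr X) (mm n A X)) u v"
    unfolding bil_def mm_def tr_def F_def
    by (simp add: sum_distrib_left sum_distrib_right algebra_simps)
  finally show ?thesis .
qed

lemma bil_ee: "a < n \<Longrightarrow> b < n \<Longrightarrow> bil n A (ee a) (ee b) = A a b"
  unfolding bil_def ee_def
  by (simp add: if_distrib[of "\<lambda>x. x * _"] if_distrib[of "\<lambda>x. _ * x"] sum.delta sum.delta' cong: if_cong)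

lemma sum_mod_cong: assumes "\<And>x. x \<in> S \<Longrightarrow> f x mod m = g x mod (m::int)"
  shows "sum f S mod m = sum g S mod m"
proof -
  have "sum f S mod m = (\<Sum>x\<in>S. f x mod m) mod m" by (simp add: mod_sum_eq)
  also have "(\<Sum>x\<in>S. f x mod m) = (\<Sum>x\<in>S. g x mod m)" using assms by (rule sum.cong[OF refl])
  also have "(\<Sum>x\<in>S. g x mod m) mod m = sum g S mod m" by (simp add: mod_sum_eq)
  finally show ?thesis .
qed

lemma bil_mc: assumes "mc p n A A'" shows "bil n A u v mod int p = bil n A' u v mod int p"
  unfolding bil_def
proof (rule sum_mod_cong, rule sum_mod_cong)
  fix i k assume "i \<in> {..<n}" "k \<in> {..<n}"
  then have "A i k mod int p = A' i k mod int p" using assms by (simp add: mc_def)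
  then show "(u i * A i k * v k) mod int p = (u i * A' i k * v k) mod int p"
    by (metis mod_mult_cong)
qed

lemma Sp_om: assumes "1 < p" "X \<in> Sp_grp p g"
  shows "om g (mv (2*g) X u) (mv (2*g) X v) mod int p = om g u v mod int p"
  using assms bil_mc[of p "2*g" "mm (2*g) (tr X) (mm (2*g) (Jm g) X)" "Jm g" u v]
  by (simp add: om_bil bil_mv Sp_iff)

lemma Sp_from_om: assumes "1 < p" "is_mat p (2*g) X"
  "\<And>u v. om g (mv (2*g) X u) (mv (2*g) X v) mod int p = om g u v mod int p"
  shows "X \<in> Sp_grp p g"
  unfolding Sp_iff[OF assms(1)]
proof (intro conjI assms(2))
  show "mc p (2*g) (mm (2*g) (tr X) (mm (2*g) (Jm g) X)) (Jm g)"
    unfolding mc_def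
  proof (intro allI impI)
    fix a b assume "a < 2*g" "b < 2*g"
    then show "mm (2*g) (tr X) (mm (2*g) (Jm g) X) a b mod int p = Jm g a b mod int p"
      using assms(3)[of "ee a" "ee b"] by (simp add: om_bil bil_mv bil_ee)
  qed
qed

lemma mv_mm: "mv n (mm n A B) x = mv n A (mv n B x)"
  unfolding mv_def mm_def by (auto simp: sum_distrib_left sum_distrib_right mult.assoc intro!: ext sum.swap[THEN trans])
lemma vc_mv: assumes "mc p n A A'" "vc p n x x'" shows "vc p n (mv n A x) (mv n A' x')"
proof -
  have "mc p n (mm n A (op x (\<lambda>_. 1))) (mm n A' (op x' (\<lambda>_. 1)))"
    by (intro mc_mm assms mc_op vc_refl)
  then show ?thesis unfolding mm_op_right by (auto simp: mc_def vc_def op_def)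
qed
lemma mv_one: "vc p n (mv n (mat_one n) x) x"
  unfolding vc_def mv_def mat_one_def
  by (simp add: if_distrib[of "\<lambda>x. x * _"] sum.delta cong: if_cong)
lemma mv_ee: "j < n \<Longrightarrow> mv n A (ee j) i = A i j"
  unfolding mv_def ee_def
  by (simp add: if_distrib[of "\<lambda>x. _ * x"] sum.delta' cong: if_cong)
lemma mc_from_mv: assumes "\<And>x. vc p n (mv n A x) (mv n B x)" shows "mc p n A B"
  unfolding mc_def
proof (intro allI impI)
  fix i j assume "i < n" "j < n"
  then show "A i j mod int p = B i j mod int p" using assms[of "ee j"] by (simp add: vc_def mv_ee)
qed
lemma rv_om: "j < 2*g \<Longrightarrow> rv g c j = om g c (ee j)"
  unfolding om_rv ee_def
  by (simp add: if_distrib[of "\<lambda>x. _ * x"] sum.delta' cong: if_cong)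
lemma vm_om: "j < 2*g \<Longrightarrow> vm (2*g) (rv g b) Y j = om g b (mv (2*g) Y (ee j))"
  unfolding om_rv vm_def by (intro sum.cong) (auto simp: mv_ee)

definition Tv :: "nat \<Rightarrow> nat \<Rightarrow> int \<Rightarrow> (nat \<Rightarrow> int) \<Rightarrow> mat" where
  "Tv p g a w = red p (2*g) (mat_one (2*g) + sc a (op w (rv g w)))"

lemma mv_Tv: "vc p (2*g) (mv (2*g) (Tv p g a w) x) (x + sv (a * om g w x) w)"
proof -
  have "vc p (2*g) (mv (2*g) (Tv p g a w) x) (mv (2*g) (mat_one (2*g) + sc a (op w (rv g w))) x)"
    unfolding Tv_def by (intro vc_mv mc_red vc_refl)
  moreover have "mv (2*g) (mat_one (2*g) + sc a (op w (rv g w))) x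
       = mv (2*g) (mat_one (2*g)) x + sv (a * om g w x) w"
    unfolding mv_def om_rv by (auto simp: plus_fun_def sc_def op_def sv_def sum.distrib sum_distrib_left algebra_simps intro!: ext)
  moreover have "vc p (2*g) (mv (2*g) (mat_one (2*g)) x + sv (a * om g w x) w) (x + sv (a * om g w x) w)"
    by (intro vc_add mv_one vc_refl)
  ultimately show ?thesis by (metis vc_trans)
qed

lemma om_Tv_exact: "om g (x + sv (a * om g w x) w) (y + sv (a * om g w y) w) = om g x y"
  by (simp add: om_add_left om_add_right om_sv_left om_sv_right algebra_simps om_anti[of g x w] om_anti[of g y w])

lemma Tv_Sp: assumes "1 < p" shows "Tv p g a w \<in> Sp_grp p g"
proof (rule Sp_from_om[OF assms])
  show "is_mat p (2*g) (Tv p g a w)" using assms by (simp add: Tv_def is_mat_red)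
  fix u v
  show "om g (mv (2*g) (Tv p g a w) u) (mv (2*g) (Tv p g a w) v) mod int p = om g u v mod int p"
  proof -
    have "om g (mv (2*g) (Tv p g a w) u) (mv (2*g) (Tv p g a w) v) mod int p
      = om g (u + sv (a * om g w u) w) (v + sv (a * om g w v) w) mod int p"
      by (rule om_vc[OF mv_Tv mv_Tv])
    then show ?thesis using om_Tv_exact by simp
  qed
qed

declare vc_trans[trans]
lemma vc_of_eq: "u = v \<Longrightarrow> vc p n u v" by simp
lemma Tv_inv: assumes "1 < p" shows "mat_mul p (2*g) (Tv p g a w) (Tv p g (-a) w) = mat_one (2*g)"
proof (rule mc_eq[of p "2*g"])
  show "is_mat p (2*g) (mat_mul p (2*g) (Tv p g a w) (Tv p g (-a) w))" using assms by (simp add: mat_mul_red is_mat_red)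
  show "is_mat p (2*g) (mat_one (2*g))" using assms by (rule is_mat_one)
  show "mc p (2*g) (mat_mul p (2*g) (Tv p g a w) (Tv p g (-a) w)) (mat_one (2*g))"
    unfolding mat_mul_red mc_red_iff
  proof (rule mc_from_mv)
    fix x
    let ?y = "x + sv (- a * om g w x) w"
    have "vc p (2*g) (mv (2*g) (mm (2*g) (Tv p g a w) (Tv p g (-a) w)) x) (mv (2*g) (Tv p g a w) ?y)"
      unfolding mv_mm by (intro vc_mv mc_refl mv_Tv)
    also have "vc p (2*g) \<dots> (?y + sv (a * om g w ?y) w)" by (rule mv_Tv)
    also have "vc p (2*g) (?y + sv (a * om g w ?y) w) x"
    proof (rule vc_of_eq)
      have "om g w ?y = om g w x" by (simp add: om_add_right om_sv_right)
      then show "?y + sv (a * om g w ?y) w = x" by (auto simp: sv_def plus_fun_def algebra_simps intro!: ext)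
    qed
    also have "vc p (2*g) x (mv (2*g) (mat_one (2*g)) x)" by (rule vc_sym[OF mv_one])
    finally show "vc p (2*g) (mv (2*g) (mm (2*g) (Tv p g a w) (Tv p g (-a) w)) x) (mv (2*g) (mat_one (2*g)) x)" .
  qed
qed
definition cj :: "nat \<Rightarrow> nat \<Rightarrow> mat \<Rightarrow> mat \<Rightarrow> mat \<Rightarrow> mat" where
  "cj p g X Y M = mat_mul p (2*g) X (mat_mul p (2*g) M Y)"

lemma XY_vc: assumes "mat_mul p (2*g) X Y = mat_one (2*g)"
  shows "vc p (2*g) (mv (2*g) X (mv (2*g) Y x)) x"
proof -
  have "mc p (2*g) (mm (2*g) X Y) (mat_one (2*g))" using assms mc_red[of p "2*g" "mm (2*g) X Y"]
    by (simp add: mat_mul_red mc_sym)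
  then have "vc p (2*g) (mv (2*g) (mm (2*g) X Y) x) (mv (2*g) (mat_one (2*g)) x)" by (intro vc_mv vc_refl)
  then show ?thesis unfolding mv_mm using mv_one vc_trans by blast
qed

lemma conj_op: assumes "1 < p" "X \<in> Sp_grp p g" "mat_mul p (2*g) X Y = mat_one (2*g)"
  shows "mc p (2*g) (mm (2*g) X (mm (2*g) (op a (rv g b)) Y)) (op (mv (2*g) X a) (rv g (mv (2*g) X b)))"
  unfolding mm_op_left mm_op_right
proof (intro mc_op vc_refl)
  show "vc p (2*g) (vm (2*g) (rv g b) Y) (rv g (mv (2*g) X b))"
    unfolding vc_def
  proof (intro allI impI)
    fix j assume j: "j < 2*g"
    have "om g (mv (2*g) X b) (ee j) mod int p = om g (mv (2*g) X b) (mv (2*g) X (mv (2*g) Y (ee j))) mod int p"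
      by (rule om_vc[OF vc_refl vc_sym[OF XY_vc[OF assms(3)]]])
    also have "\<dots> = om g b (mv (2*g) Y (ee j)) mod int p" by (rule Sp_om[OF assms(1,2)])
    finally show "vm (2*g) (rv g b) Y j mod int p = rv g (mv (2*g) X b) j mod int p"
      using j by (simp add: vm_om rv_om)
  qed
qed

lemma cj_mc: "mc p (2*g) (cj p g X Y M) (mm (2*g) X (mm (2*g) M Y))"
  unfolding cj_def mat_mul_red by (intro mc_trans[OF mc_red] mc_mmR mc_refl)
lemma cj_red: "mc p (2*g) (cj p g X Y (red p (2*g) A)) (mm (2*g) X (mm (2*g) A Y))"
  by (rule mc_trans[OF cj_mc]) (intro mc_mmR mc_mmL mc_red)
lemma is_mat_cj: "0 < p \<Longrightarrow> is_mat p (2*g) (cj p g X Y M)" by (simp add: cj_def mat_mul_red is_mat_red)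

lemma cj_Mv: assumes "1 < p" "X \<in> Sp_grp p g" "mat_mul p (2*g) X Y = mat_one (2*g)"
  shows "cj p g X Y (Mv p g u) = Mv p g (mv (2*g) X u)"
proof (rule mc_eq[of p "2*g"])
  show "is_mat p (2*g) (cj p g X Y (Mv p g u))" using assms by (simp add: is_mat_cj)
  show "is_mat p (2*g) (Mv p g (mv (2*g) X u))" using assms by (simp add: Mv_def is_mat_red)
  show "mc p (2*g) (cj p g X Y (Mv p g u)) (Mv p g (mv (2*g) X u))"
    unfolding Mv_def by (rule mc_trans[OF cj_red], rule mc_trans[OF conj_op[OF assms]], rule mc_sym, rule mc_red)
qed

lemma cj_Nv: assumes "1 < p" "X \<in> Sp_grp p g" "mat_mul p (2*g) X Y = mat_one (2*g)"
  shows "cj p g X Y (Nv p g u v) = Nv p g (mv (2*g) X u) (mv (2*g) X v)"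
proof (rule mc_eq[of p "2*g"])
  show "is_mat p (2*g) (cj p g X Y (Nv p g u v))" using assms by (simp add: is_mat_cj)
  show "is_mat p (2*g) (Nv p g (mv (2*g) X u) (mv (2*g) X v))" using assms by (simp add: Nv_def is_mat_red)
  have "mc p (2*g) (cj p g X Y (Nv p g u v)) (mm (2*g) X (mm (2*g) (op u (rv g v) + op v (rv g u)) Y))"
    unfolding Nv_def by (rule cj_red)
  also have "mc p (2*g) (mm (2*g) X (mm (2*g) (op u (rv g v) + op v (rv g u)) Y))
     (mm (2*g) X (mm (2*g) (op u (rv g v)) Y) + mm (2*g) X (mm (2*g) (op v (rv g u)) Y))"
    by (rule eq_mc) (simp add: mm_add_left mm_add_right)
  also have "mc p (2*g) \<dots> (op (mv (2*g) X u) (rv g (mv (2*g) X v)) + op (mv (2*g) X v) (rv g (mv (2*g) X u)))"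
    by (intro mc_add conj_op assms)
  also have "mc p (2*g) \<dots> (Nv p g (mv (2*g) X u) (mv (2*g) X v))"
    unfolding Nv_def by (rule mc_sym, rule mc_red)
  finally show "mc p (2*g) (cj p g X Y (Nv p g u v)) (Nv p g (mv (2*g) X u) (mv (2*g) X v))" .
qed

lemma cj_add: assumes "0 < p"
  shows "cj p g X Y (mat_add p (2*g) A B) = mat_add p (2*g) (cj p g X Y A) (cj p g X Y B)"
proof (rule mc_eq[of p "2*g"])
  show "is_mat p (2*g) (cj p g X Y (mat_add p (2*g) A B))" using assms by (simp add: is_mat_cj)
  show "is_mat p (2*g) (mat_add p (2*g) (cj p g X Y A) (cj p g X Y B))" using assms by (simp add: mat_add_red is_mat_red)
  have "mc p (2*g) (cj p g X Y (mat_add p (2*g) A B)) (mm (2*g) X (mm (2*g) (A + B) Y))"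
    unfolding mat_add_red by (rule cj_red)
  also have "mc p (2*g) (mm (2*g) X (mm (2*g) (A + B) Y)) (mm (2*g) X (mm (2*g) A Y) + mm (2*g) X (mm (2*g) B Y))"
    by (rule eq_mc) (simp add: mm_add_left mm_add_right)
  also have "mc p (2*g) \<dots> (cj p g X Y A + cj p g X Y B)"
    by (intro mc_add mc_sym[OF cj_mc])
  also have "mc p (2*g) \<dots> (mat_add p (2*g) (cj p g X Y A) (cj p g X Y B))"
    by (rule mc_sym[OF mat_add_mc])
  finally show "mc p (2*g) (cj p g X Y (mat_add p (2*g) A B)) (mat_add p (2*g) (cj p g X Y A) (cj p g X Y B))" .
qed

lemma cj_sp: assumes "1 < p" "X \<in> Sp_grp p g" "mat_mul p (2*g) X Y = mat_one (2*g)" "M \<in> sp_lie p g"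
  shows "cj p g X Y M \<in> sp_lie p g"
proof (rule span[where P="\<lambda>M. cj p g X Y M \<in> sp_lie p g", OF assms(1) _ _ assms(4)])
  show "cj p g X Y (Mv p g u) \<in> sp_lie p g" for u using assms by (simp add: cj_Mv Mv_sp)
  show "cj p g X Y (mat_add p (2*g) A B) \<in> sp_lie p g" if "cj p g X Y A \<in> sp_lie p g" "cj p g X Y B \<in> sp_lie p g" for A B
    using that assms by (simp add: cj_add sp_add)
qed



abbreviation G0 :: "nat \<Rightarrow> nat \<Rightarrow> (mat \<times> mat \<Rightarrow>\<^sub>0 int) monoid" where
  "G0 p g \<equiv> free_Abelian_group (sp_lie p g \<times> sp_lie p g)"
definition HH :: "nat \<Rightarrow> nat \<Rightarrow> (mat \<times> mat \<Rightarrow>\<^sub>0 int) set" where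
  "HH p g = generate (G0 p g) (coinv_rels p g)"

lemma keys_frag2: "Poly_Mapping.keys (frag_of a - frag_of b) \<subseteq> {a,b}"
  using keys_diff[of "frag_of a" "frag_of b"] by auto
lemma keys_frag3: "Poly_Mapping.keys (frag_of a - frag_of b - frag_of c) \<subseteq> {a,b,c}"
  using keys_diff[of "frag_of a - frag_of b" "frag_of c"] keys_frag2[of a b] by auto

lemma rels_carrier: assumes "1 < p" shows "coinv_rels p g \<subseteq> carrier (G0 p g)"
proof
  fix x assume x: "x \<in> coinv_rels p g"
  show "x \<in> carrier (G0 p g)"
    using x unfolding coinv_rels_def carrier_free_Abelian_group_iff
  proof (elim UnE CollectE exE conjE)
    fix M M' N assume e: "x = frag_of (mat_add p (2*g) M M', N) - frag_of (M, N) - frag_of (M', N)"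
      and a: "M \<in> sp_lie p g" "M' \<in> sp_lie p g" "N \<in> sp_lie p g"
    show "Poly_Mapping.keys x \<subseteq> sp_lie p g \<times> sp_lie p g"
      unfolding e by (rule order_trans[OF keys_frag3]) (use a sp_add[OF assms] in auto)
  next
    fix M N N' assume e: "x = frag_of (M, mat_add p (2*g) N N') - frag_of (M, N) - frag_of (M, N')"
      and a: "M \<in> sp_lie p g" "N \<in> sp_lie p g" "N' \<in> sp_lie p g"
    show "Poly_Mapping.keys x \<subseteq> sp_lie p g \<times> sp_lie p g"
      unfolding e by (rule order_trans[OF keys_frag3]) (use a sp_add[OF assms] in auto)
  next
    fix M assume "x = frag_of (M, M)" "M \<in> sp_lie p g"
    then show "Poly_Mapping.keys x \<subseteq> sp_lie p g \<times> sp_lie p g" by simp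
  next
    fix X Y M N assume e: "x = frag_of (mat_mul p (2*g) X (mat_mul p (2*g) M Y), mat_mul p (2*g) X (mat_mul p (2*g) N Y)) - frag_of (M, N)"
      and a: "X \<in> Sp_grp p g" "is_mat p (2*g) Y" "mat_mul p (2*g) X Y = mat_one (2*g)" "M \<in> sp_lie p g" "N \<in> sp_lie p g"
    have c: "cj p g X Y M \<in> sp_lie p g" "cj p g X Y N \<in> sp_lie p g" using a cj_sp[OF assms] by auto
    show "Poly_Mapping.keys x \<subseteq> sp_lie p g \<times> sp_lie p g"
      unfolding e by (rule order_trans[OF keys_frag2]) (use a c in \<open>auto simp: cj_def\<close>)
  qed
qed

lemma HH_subgroup: "1 < p \<Longrightarrow> subgroup (HH p g) (G0 p g)"
  unfolding HH_def by (rule group.generate_is_subgroup[OF group_free_Abelian_group rels_carrier])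

lemma HH_carrier: "1 < p \<Longrightarrow> x \<in> HH p g \<Longrightarrow> Poly_Mapping.keys x \<subseteq> sp_lie p g \<times> sp_lie p g"
  using subgroup.subset[OF HH_subgroup] by fastforce

lemma HH_add: "1 < p \<Longrightarrow> x \<in> HH p g \<Longrightarrow> y \<in> HH p g \<Longrightarrow> x + y \<in> HH p g"
  using subgroup.m_closed[OF HH_subgroup] by fastforce
lemma HH_neg: "1 < p \<Longrightarrow> x \<in> HH p g \<Longrightarrow> - x \<in> HH p g"
  using subgroup.m_inv_closed[OF HH_subgroup] HH_carrier by fastforce
lemma HH_diff: "1 < p \<Longrightarrow> x \<in> HH p g \<Longrightarrow> y \<in> HH p g \<Longrightarrow> x - y \<in> HH p g"
  using HH_add[of p x g "-y"] HH_neg by simp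
lemma HH_zero: "1 < p \<Longrightarrow> 0 \<in> HH p g"
  using subgroup.one_closed[OF HH_subgroup] by fastforce
lemma HH_cmul: assumes "1 < p" "x \<in> HH p g" shows "frag_cmul k x \<in> HH p g"
proof -
  have "x [^]\<^bsub>G0 p g\<^esub> k \<in> HH p g"
    by (rule group.subgroup_int_pow_closed[OF group_free_Abelian_group HH_subgroup[OF assms(1)] assms(2)])
  then show ?thesis using HH_carrier[OF assms] by simp
qed
lemma HH_rel: "x \<in> coinv_rels p g \<Longrightarrow> x \<in> HH p g"
  unfolding HH_def by (rule generate.incl)

lemma Rl: assumes "M \<in> sp_lie p g" "M' \<in> sp_lie p g" "N \<in> sp_lie p g"
  shows "frag_of (mat_add p (2*g) M M', N) - frag_of (M,N) - frag_of (M',N) \<in> HH p g"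
  by (rule HH_rel, unfold coinv_rels_def, rule UnI1, rule UnI1, rule UnI1) (use assms in blast)
lemma Rr: assumes "M \<in> sp_lie p g" "N \<in> sp_lie p g" "N' \<in> sp_lie p g"
  shows "frag_of (M, mat_add p (2*g) N N') - frag_of (M,N) - frag_of (M,N') \<in> HH p g"
  by (rule HH_rel, unfold coinv_rels_def, rule UnI1, rule UnI1, rule UnI2) (use assms in blast)
lemma Ra: assumes "M \<in> sp_lie p g" shows "frag_of (M, M) \<in> HH p g"
  by (rule HH_rel, unfold coinv_rels_def, rule UnI1, rule UnI2) (use assms in blast)
lemma Rc: assumes "X \<in> Sp_grp p g" "is_mat p (2*g) Y" "mat_mul p (2*g) X Y = mat_one (2*g)"
   "M \<in> sp_lie p g" "N \<in> sp_lie p g"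
  shows "frag_of (cj p g X Y M, cj p g X Y N) - frag_of (M,N) \<in> HH p g"
  unfolding cj_def by (rule HH_rel, unfold coinv_rels_def, rule UnI2) (use assms in blast)

lemma mat_add_zero: "mat_add p n 0 0 = 0" by (auto simp: mat_add_def zero_fun_def intro!: ext)

lemma R0l: assumes "1 < p" "N \<in> sp_lie p g" shows "frag_of (0, N) \<in> HH p g"
proof -
  have "frag_of (mat_add p (2*g) 0 0, N) - frag_of (0,N) - frag_of (0,N) \<in> HH p g"
    by (rule Rl) (use assms zero_sp in auto)
  then have "- frag_of (0,N) \<in> HH p g" by (simp add: mat_add_zero)
  then show ?thesis using HH_neg[OF assms(1)] by fastforce
qed
lemma R0r: assumes "1 < p" "N \<in> sp_lie p g" shows "frag_of (N, 0) \<in> HH p g"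
proof -
  have "frag_of (N, mat_add p (2*g) 0 0) - frag_of (N,0) - frag_of (N,0) \<in> HH p g"
    by (rule Rr) (use assms zero_sp in auto)
  then have "- frag_of (N,0) \<in> HH p g" by (simp add: mat_add_zero)
  then show ?thesis using HH_neg[OF assms(1)] by fastforce
qed

lemma Ranti: assumes "1 < p" "M \<in> sp_lie p g" "N \<in> sp_lie p g"
  shows "frag_of (M, N) + frag_of (N, M) \<in> HH p g"
proof -
  let ?S = "mat_add p (2*g) M N"
  have S: "?S \<in> sp_lie p g" using sp_add assms by blast
  have 1: "frag_of (?S, ?S) \<in> HH p g" by (rule Ra[OF S])
  have 2: "frag_of (?S, ?S) - frag_of (M,?S) - frag_of (N,?S) \<in> HH p g" by (rule Rl) (use assms S in auto)
  have 3: "frag_of (M, ?S) - frag_of (M,M) - frag_of (M,N) \<in> HH p g" by (rule Rr) (use assms in auto)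
  have 4: "frag_of (N, ?S) - frag_of (N,M) - frag_of (N,N) \<in> HH p g" by (rule Rr) (use assms in auto)
  have 5: "frag_of (M,M) \<in> HH p g" "frag_of (N,N) \<in> HH p g" using Ra assms by auto
  have "frag_of (M, N) + frag_of (N, M) = frag_of (?S, ?S) - (frag_of (?S, ?S) - frag_of (M,?S) - frag_of (N,?S))
     - (frag_of (M, ?S) - frag_of (M,M) - frag_of (M,N)) - (frag_of (N, ?S) - frag_of (N,M) - frag_of (N,N))
     - frag_of (M,M) - frag_of (N,N)"
    by (simp add: algebra_simps)
  moreover have "frag_of (?S, ?S) - (frag_of (?S, ?S) - frag_of (M,?S) - frag_of (N,?S))
     - (frag_of (M, ?S) - frag_of (M,M) - frag_of (M,N)) - (frag_of (N, ?S) - frag_of (N,M) - frag_of (N,N))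
     - frag_of (M,M) - frag_of (N,N) \<in> HH p g"
    using HH_diff[OF assms(1) HH_diff[OF assms(1) HH_diff[OF assms(1) HH_diff[OF assms(1) HH_diff[OF assms(1) 1 2] 3] 4] 5(1)] 5(2)] .
  ultimately show ?thesis by simp
qed

lemma Rkm: assumes "1 < p" "M \<in> sp_lie p g" "N \<in> sp_lie p g"
  shows "frag_of (km p (2*g) k M, N) - frag_cmul (int k) (frag_of (M, N)) \<in> HH p g"
proof (induction k)
  case 0
  have "frag_of (km p (2*g) 0 M, N) \<in> HH p g" by (subst km_0) (rule R0l[OF assms(1,3)])
  then show ?case by simp
next
  case (Suc k)
  have kk: "km p (2*g) k M \<in> sp_lie p g"
    using km_P[where P="\<lambda>_. True", OF assms(1)] assms(2) by auto
  have r: "frag_of (mat_add p (2*g) (km p (2*g) k M) M, N) - frag_of (km p (2*g) k M, N) - frag_of (M,N) \<in> HH p g"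
    by (rule Rl) (use assms kk in auto)
  have "frag_of (km p (2*g) (Suc k) M, N) - frag_cmul (int (Suc k)) (frag_of (M, N))
     = (frag_of (mat_add p (2*g) (km p (2*g) k M) M, N) - frag_of (km p (2*g) k M, N) - frag_of (M,N))
       + (frag_of (km p (2*g) k M, N) - frag_cmul (int k) (frag_of (M, N)))"
    using assms(1) by (simp add: km_Suc frag_cmul_distrib algebra_simps)
  moreover have "(frag_of (mat_add p (2*g) (km p (2*g) k M) M, N) - frag_of (km p (2*g) k M, N) - frag_of (M,N))
       + (frag_of (km p (2*g) k M, N) - frag_cmul (int k) (frag_of (M, N))) \<in> HH p g"
    using r Suc by (intro HH_add[OF assms(1)])
  ultimately show ?case by simp
qed

lemma km_p: "0 < p \<Longrightarrow> km p n p M = 0"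
  by (auto simp: km_def red_def sc_def zero_fun_def intro!: ext)

lemma Rp: assumes "1 < p" "M \<in> sp_lie p g" "N \<in> sp_lie p g"
  shows "frag_cmul (int p) (frag_of (M, N)) \<in> HH p g"
proof -
  have "frag_of (km p (2*g) p M, N) - frag_cmul (int p) (frag_of (M, N)) \<in> HH p g" by (rule Rkm[OF assms])
  moreover have "frag_of (km p (2*g) p M, N) \<in> HH p g" using assms(1) by (subst km_p) (auto intro: R0l[OF assms(1,3)])
  ultimately have "frag_of (km p (2*g) p M, N) - (frag_of (km p (2*g) p M, N) - frag_cmul (int p) (frag_of (M, N))) \<in> HH p g"
    using HH_diff[OF assms(1)] by blast
  then show ?thesis by simp
qed



lemma Mv_vc: assumes "1 < p" "vc p (2*g) u u'" shows "Mv p g u = Mv p g u'"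
  unfolding Mv_def using assms by (intro red_cong mc_op vc_rv) auto
lemma Nv_vc: assumes "1 < p" "vc p (2*g) u u'" "vc p (2*g) v v'" shows "Nv p g u v = Nv p g u' v'"
  unfolding Nv_def using assms by (intro red_cong mc_add mc_op vc_rv) auto

lemma Mv_add: assumes "1 < p" shows "Mv p g (u+v) = mat_add p (2*g) (mat_add p (2*g) (Mv p g u) (Mv p g v)) (Nv p g u v)"
proof (rule mc_eq[of p "2*g"])
  show "is_mat p (2*g) (Mv p g (u+v))" using assms by (simp add: Mv_def is_mat_red)
  show "is_mat p (2*g) (mat_add p (2*g) (mat_add p (2*g) (Mv p g u) (Mv p g v)) (Nv p g u v))"
    using assms by (simp add: mat_add_red is_mat_red)
  have "mc p (2*g) (mat_add p (2*g) (mat_add p (2*g) (Mv p g u) (Mv p g v)) (Nv p g u v))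
     ((op u (rv g u) + op v (rv g v)) + (op u (rv g v) + op v (rv g u)))"
    by (rule mc_trans[OF mat_add_mc]) (intro mc_add mc_trans[OF mat_add_mc] Mv_mc Nv_mc)
  also have "mc p (2*g) ((op u (rv g u) + op v (rv g v)) + (op u (rv g v) + op v (rv g u))) (op (u+v) (rv g (u+v)))"
    by (rule eq_mc) (auto simp: op_def rv_def plus_fun_def algebra_simps intro!: ext)
  also have "mc p (2*g) (op (u+v) (rv g (u+v))) (Mv p g (u+v))" by (rule mc_sym[OF Mv_mc])
  finally show "mc p (2*g) (Mv p g (u+v)) (mat_add p (2*g) (mat_add p (2*g) (Mv p g u) (Mv p g v)) (Nv p g u v))"
    by (rule mc_sym)
qed

lemma Mv_neg: "Mv p g (sv (-1) u) = Mv p g u"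
  unfolding Mv_def by (rule arg_cong[where f="red p (2*g)"]) (auto simp: op_def rv_def sv_def intro!: ext)

lemma Nv_add_left: assumes "1 < p" shows "Nv p g (a+b) c = mat_add p (2*g) (Nv p g a c) (Nv p g b c)"
proof (rule mc_eq[of p "2*g"])
  show "is_mat p (2*g) (Nv p g (a+b) c)" using assms by (simp add: Nv_def is_mat_red)
  show "is_mat p (2*g) (mat_add p (2*g) (Nv p g a c) (Nv p g b c))"
    using assms by (simp add: mat_add_red is_mat_red)
  have "mc p (2*g) (mat_add p (2*g) (Nv p g a c) (Nv p g b c))
     ((op a (rv g c) + op c (rv g a)) + (op b (rv g c) + op c (rv g b)))"
    by (rule mc_trans[OF mat_add_mc]) (intro mc_add Nv_mc)
  also have "mc p (2*g) ((op a (rv g c) + op c (rv g a)) + (op b (rv g c) + op c (rv g b))) (op (a+b) (rv g c) + op c (rv g (a+b)))"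
    by (rule eq_mc) (auto simp: op_def rv_def plus_fun_def algebra_simps intro!: ext)
  also have "mc p (2*g) (op (a+b) (rv g c) + op c (rv g (a+b))) (Nv p g (a+b) c)" by (rule mc_sym[OF Nv_mc])
  finally show "mc p (2*g) (Nv p g (a+b) c) (mat_add p (2*g) (Nv p g a c) (Nv p g b c))"
    by (rule mc_sym)
qed

lemma Nv_self: assumes "1 < p" shows "Nv p g u u = mat_add p (2*g) (Mv p g u) (Mv p g u)"
proof (rule mc_eq[of p "2*g"])
  show "is_mat p (2*g) (Nv p g u u)" using assms by (simp add: Nv_def is_mat_red)
  show "is_mat p (2*g) (mat_add p (2*g) (Mv p g u) (Mv p g u))"
    using assms by (simp add: mat_add_red is_mat_red)
  have "mc p (2*g) (mat_add p (2*g) (Mv p g u) (Mv p g u)) (op u (rv g u) + op u (rv g u))"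
    by (rule mc_trans[OF mat_add_mc]) (intro mc_add Mv_mc)
  also have "mc p (2*g) (op u (rv g u) + op u (rv g u)) (Nv p g u u)" by (rule mc_sym[OF Nv_mc])
  finally show "mc p (2*g) (Nv p g u u) (mat_add p (2*g) (Mv p g u) (Mv p g u))" by (rule mc_sym)
qed

definition Ff :: "nat \<Rightarrow> nat \<Rightarrow> (nat \<Rightarrow> int) \<Rightarrow> (nat \<Rightarrow> int) \<Rightarrow> (mat \<times> mat \<Rightarrow>\<^sub>0 int)" where
  "Ff p g x y = frag_of (Mv p g x, Mv p g y)"
definition Bf :: "nat \<Rightarrow> nat \<Rightarrow> (nat \<Rightarrow> int) \<Rightarrow> (nat \<Rightarrow> int) \<Rightarrow> (nat \<Rightarrow> int) \<Rightarrow> (mat \<times> mat \<Rightarrow>\<^sub>0 int)" where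
  "Bf p g x a b = frag_of (Mv p g x, Nv p g a b)"

lemma Fmove: assumes "1 < p" "vc p (2*g) (u + sv (a * om g w u) w) u'" "vc p (2*g) (v + sv (a * om g w v) w) v'"
  shows "Ff p g u v - Ff p g u' v' \<in> HH p g"
proof -
  let ?X = "Tv p g a w" and ?Y = "Tv p g (-a) w"
  have r: "frag_of (cj p g ?X ?Y (Mv p g u), cj p g ?X ?Y (Mv p g v)) - frag_of (Mv p g u, Mv p g v) \<in> HH p g"
    using assms(1) by (intro Rc Tv_Sp Tv_inv Mv_sp) (auto simp: Tv_def is_mat_red)
  have "cj p g ?X ?Y (Mv p g u) = Mv p g u'"
    using assms by (simp add: cj_Mv Tv_Sp Tv_inv) (intro Mv_vc vc_trans[OF mv_Tv]; simp)
  moreover have "cj p g ?X ?Y (Mv p g v) = Mv p g v'"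
    using assms by (simp add: cj_Mv Tv_Sp Tv_inv) (intro Mv_vc vc_trans[OF mv_Tv]; simp)
  ultimately have "Ff p g u' v' - Ff p g u v \<in> HH p g" using r by (simp add: Ff_def)
  then show ?thesis using HH_neg[OF assms(1)] by fastforce
qed

lemma Fexp2: assumes "1 < p"
  shows "Ff p g x (u+v) - Ff p g x u - Ff p g x v - Bf p g x u v \<in> HH p g"
proof -
  have 1: "frag_of (Mv p g x, mat_add p (2*g) (mat_add p (2*g) (Mv p g u) (Mv p g v)) (Nv p g u v))
     - frag_of (Mv p g x, mat_add p (2*g) (Mv p g u) (Mv p g v)) - frag_of (Mv p g x, Nv p g u v) \<in> HH p g"
    using assms by (intro Rr sp_add Mv_sp Nv_sp)
  have 2: "frag_of (Mv p g x, mat_add p (2*g) (Mv p g u) (Mv p g v)) - frag_of (Mv p g x, Mv p g u) - frag_of (Mv p g x, Mv p g v) \<in> HH p g"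
    using assms by (intro Rr sp_add Mv_sp Nv_sp)
  have "Ff p g x (u+v) - Ff p g x u - Ff p g x v - Bf p g x u v =
    (frag_of (Mv p g x, mat_add p (2*g) (mat_add p (2*g) (Mv p g u) (Mv p g v)) (Nv p g u v))
     - frag_of (Mv p g x, mat_add p (2*g) (Mv p g u) (Mv p g v)) - frag_of (Mv p g x, Nv p g u v)) +
    (frag_of (Mv p g x, mat_add p (2*g) (Mv p g u) (Mv p g v)) - frag_of (Mv p g x, Mv p g u) - frag_of (Mv p g x, Mv p g v))"
    using assms by (simp add: Ff_def Bf_def Mv_add)
  then show ?thesis using HH_add[OF assms(1) 1 2] by simp
qed

lemma Bexp: assumes "1 < p"
  shows "Bf p g x (a+b) c - Bf p g x a c - Bf p g x b c \<in> HH p g"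
  unfolding Bf_def Nv_add_left[OF assms] using assms by (intro Rr Mv_sp Nv_sp)

lemma Bself: assumes "1 < p"
  shows "Bf p g x u u - Ff p g x u - Ff p g x u \<in> HH p g"
  unfolding Bf_def Ff_def Nv_self[OF assms] using assms by (intro Rr Mv_sp)

lemma Fanti: "1 < p \<Longrightarrow> Ff p g x y + Ff p g y x \<in> HH p g"
  unfolding Ff_def by (intro Ranti Mv_sp)
lemma Fself: "1 < p \<Longrightarrow> Ff p g x x \<in> HH p g"
  unfolding Ff_def by (intro Ra Mv_sp)
lemma Fp: "1 < p \<Longrightarrow> frag_cmul (int p) (Ff p g x y) \<in> HH p g"
  unfolding Ff_def by (intro Rp Mv_sp)
lemma inv_exists: assumes "prime p" "c mod int p \<noteq> 0" shows "\<exists>a. (a * c) mod int p = (-1) mod int p"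
proof -
  have pi: "prime (int p)" using assms(1) by simp
  have "\<not> int p dvd c" using assms(2) by (simp add: dvd_eq_mod_eq_0)
  then have "coprime (int p) c" by (rule prime_imp_coprime[OF pi])
  then have g: "gcd c (int p) = 1" by (simp add: coprime_iff_gcd_eq_1 gcd.commute)
  obtain s t where "s * c + t * int p = gcd c (int p)" using bezout_int by blast
  then have "(- s) * c = -1 + t * int p" using g by (simp add: algebra_simps)
  then have "((- s) * c) mod int p = (-1) mod int p" by (simp only: mod_mult_self1)
  then show ?thesis by blast
qed

lemma vc_addsv: "c mod int p = d mod int p \<Longrightarrow> vc p n (x + sv c w) (x + sv d w)"
  by (intro vc_add vc_refl vc_sv_cong)

lemma odd_unit: assumes p: "1 < p" "odd p" and a: "(a * om g u v) mod int p = (-1) mod int p"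
  shows "Ff p g u v \<in> HH p g"
proof -
  let ?c = "om g u v"
  have a2: "(a * om g v u) mod int p = 1 mod int p"
  proof -
    have "a * om g v u = - (a * ?c)" by (simp add: om_anti[of g v u])
    then show ?thesis using a by (metis add.inverse_inverse mod_minus_eq)
  qed
  have E1: "Ff p g u v - Ff p g u (v + sv (-1) u) \<in> HH p g"
  proof (rule Fmove[OF p(1), where a=a and w=u])
    show "vc p (2*g) (u + sv (a * om g u u) u) u" by (rule vc_of_eq) (auto simp: sv_def plus_fun_def)
    show "vc p (2*g) (v + sv (a * om g u v) u) (v + sv (-1) u)" by (rule vc_addsv[OF a])
  qed
  have E2: "Ff p g u (v + sv (-1) u) - Ff p g (u + v) (sv (-1) u) \<in> HH p g"
  proof (rule Fmove[OF p(1), where a=a and w=v])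
    have "vc p (2*g) (u + sv (a * om g v u) v) (u + sv 1 v)" by (rule vc_addsv[OF a2])
    then show "vc p (2*g) (u + sv (a * om g v u) v) (u + v)" by (simp add: sv_def)
    have e: "om g v (v + sv (- 1) u) = ?c" by (simp add: om_add_right om_sv_right om_anti[of g v u])
    have "vc p (2*g) (v + sv (-1) u + sv (a * om g v (v + sv (- 1) u)) v) (v + sv (-1) u + sv (-1) v)"
      unfolding e by (rule vc_addsv[OF a])
    then show "vc p (2*g) (v + sv (-1) u + sv (a * om g v (v + sv (- 1) u)) v) (sv (-1) u)"
      by (simp add: sv_def plus_fun_def)
  qed
  have E3: "Ff p g (u + v) (sv (-1) u) - Ff p g v (sv (-1) u) \<in> HH p g"
  proof (rule Fmove[OF p(1), where a=a and w=u])
    have e: "om g u (u + v) = ?c" by (simp add: om_add_right)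
    have "vc p (2*g) (u + v + sv (a * om g u (u + v)) u) (u + v + sv (-1) u)"
      unfolding e by (rule vc_addsv[OF a])
    then show "vc p (2*g) (u + v + sv (a * om g u (u + v)) u) v"
      by (simp add: sv_def plus_fun_def)
    have e2: "om g u (sv (-1) u) = 0" by (simp add: om_sv_right)
    show "vc p (2*g) (sv (-1) u + sv (a * om g u (sv (-1) u)) u) (sv (-1) u)"
      unfolding e2 by (rule vc_of_eq) (auto simp: sv_def plus_fun_def)
  qed
  have E4: "Ff p g u v + Ff p g v u \<in> HH p g" by (rule Fanti[OF p(1)])
  have nf: "Ff p g v (sv (-1) u) = Ff p g v u" by (simp add: Ff_def Mv_neg)
  define D where "D = Ff p g u v - Ff p g v u"
  have D: "D \<in> HH p g"
  proof -
    have "D = (Ff p g u v - Ff p g u (v + sv (-1) u)) + (Ff p g u (v + sv (-1) u) - Ff p g (u + v) (sv (-1) u))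
       + (Ff p g (u + v) (sv (-1) u) - Ff p g v (sv (-1) u))" unfolding D_def nf by simp
    then show ?thesis using HH_add[OF p(1) HH_add[OF p(1) E1 E2] E3] by simp
  qed
  define S where "S = Ff p g u v + Ff p g v u"
  have S: "S \<in> HH p g" using E4 by (simp add: S_def)
  define k where "k = (int p + 1) div 2"
  have k: "int p = 2 * k - 1" unfolding k_def using p(2) by (auto elim!: oddE)
  have DS: "D + S = frag_cmul 2 (Ff p g u v)"
    unfolding D_def S_def using frag_cmul_distrib[of 1 1 "Ff p g u v"] by simp
  have "frag_cmul k (D + S) - frag_cmul (int p) (Ff p g u v) = frag_cmul (k * 2 - int p) (Ff p g u v)"
    unfolding DS by (simp add: frag_cmul_diff_distrib)
  also have "k * 2 - int p = 1" using k by simp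
  finally have "Ff p g u v = frag_cmul k (D + S) - frag_cmul (int p) (Ff p g u v)" by simp
  moreover have "frag_cmul k (D + S) - frag_cmul (int p) (Ff p g u v) \<in> HH p g"
    using D S by (intro HH_diff[OF p(1)] HH_cmul[OF p(1)] HH_add[OF p(1)] Fp[OF p(1)])
  ultimately show ?thesis by simp
qed
lemma unit_Ff: assumes "1 < p" "odd p" "prime p" "\<not> int p dvd om g u v" shows "Ff p g u v \<in> HH p g"
proof -
  obtain a where "(a * om g u v) mod int p = (-1) mod int p"
    using inv_exists[OF assms(3)] assms(4) by (auto simp: dvd_eq_mod_eq_0)
  then show ?thesis using odd_unit assms(1,2) by blast
qed

lemma odd_zero: assumes p: "1 < p" "odd p" "prime p" and ov: "int p dvd om g u v"
  and m: "m < 2*g" "\<not> int p dvd u m"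
  shows "Ff p g u v \<in> HH p g"
proof -
  define k where "k = (if m < g then m + g else m - g)"
  have k2: "k < 2*g" using m(1) by (auto simp: k_def)
  define w where "w = ee k"
  define c where "c = om g u w"
  have "c = rv g u k" unfolding c_def w_def using rv_om[OF k2] by simp
  then have "c = u m \<or> c = - u m" using m(1) by (auto simp: k_def rv_def)
  then have nc: "\<not> int p dvd c" using m(2) by auto
  have pi: "prime (int p)" using p(3) by simp
  have n2: "\<not> int p dvd 2" using p(1,2)
    by (metis dvd_refl even_numeral int_dvd_int_iff not_prime_1 of_nat_numeral p(3) prime_nat_iff two_is_prime_nat dvd_trans)
  have K1: "Ff p g u (v + w) \<in> HH p g"
  proof (rule unit_Ff[OF p])
    have "om g u (v + w) = om g u v + c" by (simp add: om_add_right c_def)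
    then show "\<not> int p dvd om g u (v + w)" using ov nc by (metis dvd_add_right_iff)
  qed
  have K2: "Ff p g u w \<in> HH p g" by (rule unit_Ff[OF p]) (use nc in \<open>simp add: c_def\<close>)
  have K3: "Ff p g u (v + w + w) \<in> HH p g"
  proof (rule unit_Ff[OF p])
    have "om g u (v + w + w) = om g u v + 2 * c" by (simp only: om_add_right, simp add: c_def)
    moreover have "\<not> int p dvd 2 * c" using n2 nc pi by (simp add: prime_dvd_mult_iff)
    ultimately show "\<not> int p dvd om g u (v + w + w)" using ov by (metis dvd_add_right_iff)
  qed
  have E1: "Ff p g u (v+w) - Ff p g u v - Ff p g u w - Bf p g u v w \<in> HH p g" by (rule Fexp2[OF p(1)])
  have E2: "Ff p g u (v+w+w) - Ff p g u (v+w) - Ff p g u w - Bf p g u (v+w) w \<in> HH p g" by (rule Fexp2[OF p(1)])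
  have E3: "Bf p g u (v+w) w - Bf p g u v w - Bf p g u w w \<in> HH p g" by (rule Bexp[OF p(1)])
  have E4: "Bf p g u w w - Ff p g u w - Ff p g u w \<in> HH p g" by (rule Bself[OF p(1)])
  define k1 where "k1 = Ff p g u (v + w)"
  define k2 where "k2 = Ff p g u w"
  define k3 where "k3 = Ff p g u (v + w + w)"
  define e1 where "e1 = Ff p g u (v+w) - Ff p g u v - Ff p g u w - Bf p g u v w"
  define e2 where "e2 = Ff p g u (v+w+w) - Ff p g u (v+w) - Ff p g u w - Bf p g u (v+w) w"
  define e3 where "e3 = Bf p g u (v+w) w - Bf p g u v w - Bf p g u w w"
  define e4 where "e4 = Bf p g u w w - Ff p g u w - Ff p g u w"
  have "Ff p g u v = k1 - k2 - e1 - (k3 - k1 - k2 - e2 - e4 - k2 - k2 - e3)"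
    unfolding k1_def k2_def k3_def e1_def e2_def e3_def e4_def by (simp add: algebra_simps)
  moreover have "k1 - k2 - e1 - (k3 - k1 - k2 - e2 - e4 - k2 - k2 - e3) \<in> HH p g"
  proof -
    have "k1 \<in> HH p g" "k2 \<in> HH p g" "k3 \<in> HH p g" "e1 \<in> HH p g" "e2 \<in> HH p g" "e3 \<in> HH p g" "e4 \<in> HH p g"
      unfolding k1_def k2_def k3_def e1_def e2_def e3_def e4_def by (fact K1 K2 K3 E1 E2 E3 E4)+
    then show ?thesis by (intro HH_diff[OF p(1)])
  qed
  ultimately show ?thesis by simp
qed

lemma odd_all: assumes p: "1 < p" "odd p" "prime p" shows "Ff p g u v \<in> HH p g"
proof (cases "\<forall>m<2*g. int p dvd u m")
  case True
  then have "vc p (2*g) u 0" by (auto simp: vc_def dvd_eq_mod_eq_0)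
  then have "Mv p g u = 0" using Mv_vc[OF p(1)] Mv_zero by metis
  then show ?thesis using R0l[OF p(1) Mv_sp[OF p(1)]] by (simp add: Ff_def)
next
  case False
  then obtain m where m: "m < 2*g" "\<not> int p dvd u m" by blast
  show ?thesis
  proof (cases "int p dvd om g u v")
    case True then show ?thesis using odd_zero[OF p True m] by blast
  next
    case False then show ?thesis using unit_Ff[OF p False] by blast
  qed
qed
lemma frag_all_HH: assumes "1 < p" "\<And>M N. M \<in> sp_lie p g \<Longrightarrow> N \<in> sp_lie p g \<Longrightarrow> frag_of (M,N) \<in> HH p g"
  and "Poly_Mapping.keys c \<subseteq> sp_lie p g \<times> sp_lie p g"
  shows "c \<in> HH p g"
proof (rule free_Abelian_group_induct[OF assms(3)])
  show "0 \<in> HH p g" by (rule HH_zero[OF assms(1)])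
  show "x - y \<in> HH p g" if "x \<in> HH p g" "y \<in> HH p g" for x y using that by (rule HH_diff[OF assms(1)])
  show "frag_of a \<in> HH p g" if "a \<in> sp_lie p g \<times> sp_lie p g" for a using that assms(2) by (cases a) auto
qed

lemma odd_frag: assumes p: "1 < p" "odd p" "prime p" "M \<in> sp_lie p g" "N \<in> sp_lie p g"
  shows "frag_of (M,N) \<in> HH p g"
proof -
  have inner: "frag_of (Mv p g u, N) \<in> HH p g" if "N \<in> sp_lie p g" for u N
  proof (rule span[where P="\<lambda>N. frag_of (Mv p g u, N) \<in> HH p g", OF p(1) _ _ that])
    show "frag_of (Mv p g u, Mv p g v) \<in> HH p g" for v using odd_all[OF p(1-3)] by (simp add: Ff_def)
    fix A B assume ab: "A \<in> sp_lie p g" "B \<in> sp_lie p g" "frag_of (Mv p g u, A) \<in> HH p g" "frag_of (Mv p g u, B) \<in> HH p g"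
    have "frag_of (Mv p g u, mat_add p (2*g) A B) - frag_of (Mv p g u, A) - frag_of (Mv p g u, B) \<in> HH p g"
      using ab p(1) by (intro Rr Mv_sp)
    then have "(frag_of (Mv p g u, mat_add p (2*g) A B) - frag_of (Mv p g u, A) - frag_of (Mv p g u, B))
        + frag_of (Mv p g u, A) + frag_of (Mv p g u, B) \<in> HH p g"
      using ab by (intro HH_add[OF p(1)])
    then show "frag_of (Mv p g u, mat_add p (2*g) A B) \<in> HH p g" by simp
  qed
  have "\<forall>N\<in>sp_lie p g. frag_of (M,N) \<in> HH p g"
  proof (rule span[where P="\<lambda>M. \<forall>N\<in>sp_lie p g. frag_of (M,N) \<in> HH p g", OF p(1) _ _ p(4)])
    show "\<forall>N\<in>sp_lie p g. frag_of (Mv p g u, N) \<in> HH p g" for u using inner by blast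
    fix A B assume ab: "A \<in> sp_lie p g" "B \<in> sp_lie p g" "\<forall>N\<in>sp_lie p g. frag_of (A, N) \<in> HH p g"
      "\<forall>N\<in>sp_lie p g. frag_of (B, N) \<in> HH p g"
    show "\<forall>N\<in>sp_lie p g. frag_of (mat_add p (2*g) A B, N) \<in> HH p g"
    proof
      fix N assume N: "N \<in> sp_lie p g"
      have "frag_of (mat_add p (2*g) A B, N) - frag_of (A, N) - frag_of (B, N) \<in> HH p g"
        using ab N by (intro Rl)
      then have "(frag_of (mat_add p (2*g) A B, N) - frag_of (A, N) - frag_of (B, N))
          + frag_of (A, N) + frag_of (B, N) \<in> HH p g"
        using ab N by (intro HH_add[OF p(1)]) auto
      then show "frag_of (mat_add p (2*g) A B, N) \<in> HH p g" by simp
    qed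
  qed
  then show ?thesis using p(5) by blast
qed

lemma H2_eq: "H2_coinv p g = G0 p g Mod HH p g" by (simp add: H2_coinv_def HH_def)

lemma HH_normal: "1 < p \<Longrightarrow> HH p g \<lhd> G0 p g"
  by (rule comm_group.subgroup_imp_normal[OF abelian_free_Abelian_group HH_subgroup])

theorem odd_case: assumes "1 < p" "odd p" "prime p" shows "trivial_group (H2_coinv p g)"
  unfolding trivial_group_def H2_eq
proof
  show "group (G0 p g Mod HH p g)" by (rule normal.factorgroup_is_group[OF HH_normal[OF assms(1)]])
  have all: "c \<in> HH p g" if "c \<in> carrier (G0 p g)" for c
    using that by (rule_tac frag_all_HH[OF assms(1)]) (auto intro: odd_frag[OF assms])
  have rc: "r_coset (G0 p g) (HH p g) c = HH p g" if "c \<in> carrier (G0 p g)" for c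
    using subgroup.rcos_const[OF HH_subgroup[OF assms(1)] group_free_Abelian_group all[OF that]] .
  have ne: "(0::(mat \<times> mat \<Rightarrow>\<^sub>0 int)) \<in> carrier (G0 p g)" by simp
  have "(\<lambda>x. r_coset (G0 p g) (HH p g) x) ` carrier (G0 p g) = (\<lambda>x. HH p g) ` carrier (G0 p g)"
    by (rule image_cong[OF refl rc])
  also have "\<dots> = {HH p g}" using ne by blast
  finally show "carrier (G0 p g Mod HH p g) = {one (G0 p g Mod HH p g)}"
    unfolding carrier_FactGroup one_FactGroup .
qed



lemma sv0: "x + sv 0 w = x" by (auto simp: sv_def plus_fun_def)
lemma sv1: "sv 1 w = w" by (auto simp: sv_def)
lemma p2: "1 < (2::nat)" by simp

lemma vc2_double: "vc 2 n (y + (y + z)) z"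
  by (auto simp: vc_def plus_fun_def)

lemma move2: assumes "even (om g w x)" "odd (om g w t)"
  shows "Ff 2 g x t - Ff 2 g x (t + w) \<in> HH 2 g"
proof (rule Fmove[OF p2, where a=1 and w=w])
  have "vc 2 (2*g) (x + sv (1 * om g w x) w) (x + sv 0 w)"
    by (rule vc_addsv) (use assms(1) in \<open>simp add: even_iff_mod_2_eq_zero\<close>)
  then show "vc 2 (2*g) (x + sv (1 * om g w x) w) x" by (simp only: sv0)
  have "vc 2 (2*g) (t + sv (1 * om g w t) w) (t + sv 1 w)"
    by (rule vc_addsv) (use assms(2) in \<open>simp add: odd_iff_mod_2_eq_one\<close>)
  then show "vc 2 (2*g) (t + sv (1 * om g w t) w) (t + w)" by (simp only: sv1)
qed

lemma odd_om_neg: "even (om g x y) \<longleftrightarrow> even (om g y x)"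
  by (simp add: om_anti[of g x y])

lemma L1_2: assumes "odd (om g x y)" "odd (om g x y')" "odd (om g y y')"
  shows "Ff 2 g x y - Ff 2 g x y' \<in> HH 2 g"
proof (rule Fmove[OF p2, where a=1 and w="y + y'"])
  have "even (om g (y + y') x)" using assms by (simp add: om_add_left odd_om_neg)
  then have "vc 2 (2*g) (x + sv (1 * om g (y + y') x) (y + y')) (x + sv 0 (y + y'))"
    by (intro vc_addsv) (simp add: even_iff_mod_2_eq_zero)
  then show "vc 2 (2*g) (x + sv (1 * om g (y + y') x) (y + y')) x" by (simp only: sv0)
  have "odd (om g (y + y') y)" using assms by (simp add: om_add_left odd_om_neg)
  then have "vc 2 (2*g) (y + sv (1 * om g (y + y') y) (y + y')) (y + sv 1 (y + y'))"
    by (intro vc_addsv) (simp add: odd_iff_mod_2_eq_one)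
  then show "vc 2 (2*g) (y + sv (1 * om g (y + y') y) (y + y')) y'"
    unfolding sv1 using vc2_double vc_trans by blast
qed

lemma L2: assumes "odd (om g x y)" "odd (om g x y')"
  shows "Ff 2 g x y - Ff 2 g x y' \<in> HH 2 g"
proof (cases "odd (om g y y')")
  case True then show ?thesis using L1_2 assms by blast
next
  case False
  let ?z = "y' + x"
  have a: "odd (om g x ?z)" using assms by (simp add: om_add_right)
  have b: "odd (om g y ?z)" using assms False by (simp add: om_add_right odd_om_neg)
  have c: "odd (om g ?z y')" using assms by (simp add: om_add_left odd_om_neg)
  have "(Ff 2 g x y - Ff 2 g x ?z) + (Ff 2 g x ?z - Ff 2 g x y') \<in> HH 2 g"
    using L1_2[OF assms(1) a b] L1_2[OF a assms(2) c] by (rule HH_add[OF p2])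
  then show ?thesis by simp
qed

lemma sym2: "Ff 2 g x y - Ff 2 g y x \<in> HH 2 g"
proof -
  have "(Ff 2 g x y + Ff 2 g y x) - frag_cmul (int 2) (Ff 2 g y x) \<in> HH 2 g"
    using Fanti[OF p2] Fp[OF p2] by (rule HH_diff[OF p2])
  moreover have "frag_cmul (int 2) (Ff 2 g y x) = Ff 2 g y x + Ff 2 g y x"
    using frag_cmul_distrib[of 1 1 "Ff 2 g y x"] by simp
  ultimately show ?thesis by (simp add: algebra_simps)
qed

definition sg :: "nat \<Rightarrow> nat \<Rightarrow> nat" where "sg g m = (if m < g then m + g else m - g)"

lemma om_ee_sg: assumes "m < 2*g" shows "om g (ee (sg g m)) y = (if m < g then - y m else y m)"
proof (cases "m < g")
  case True
  have "om g (ee (sg g m)) y = (\<Sum>i<g. - (if i = m then y i else 0))"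
    unfolding om_def using True by (intro sum.cong) (auto simp: sg_def ee_def)
  also have "\<dots> = - y m" using True by (simp add: sum_negf sum.delta')
  finally show ?thesis using True by simp
next
  case False
  have "om g (ee (sg g m)) y = (\<Sum>i<g. (if i = m - g then y (i+g) else 0))"
    unfolding om_def using False assms by (intro sum.cong) (auto simp: sg_def ee_def)
  also have "\<dots> = y m" using False assms by (simp add: sum.delta')
  finally show ?thesis using False by simp
qed

lemma odd_om_ee: "m < 2*g \<Longrightarrow> even (om g (ee (sg g m)) y) \<longleftrightarrow> even (y m)"
  by (simp add: om_ee_sg)

lemma D2: assumes "m0 < 2*g" "odd (y m0)" "m1 < 2*g" "odd (x m1) \<noteq> odd (y m1)"
  shows "\<exists>a. odd (om g a y) \<and> even (om g a x)"
proof (cases "odd (x m0)")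
  case False then show ?thesis using assms by (intro exI[of _ "ee (sg g m0)"]) (simp add: odd_om_ee)
next
  case x0: True
  show ?thesis
  proof (cases "odd (y m1)")
    case True then show ?thesis using assms by (intro exI[of _ "ee (sg g m1)"]) (simp add: odd_om_ee)
  next
    case False
    then have "odd (x m1)" using assms by simp
    then show ?thesis using assms x0 False
      by (intro exI[of _ "ee (sg g m0) + ee (sg g m1)"]) (simp add: om_add_left odd_om_ee)
  qed
qed

definition nz :: "nat \<Rightarrow> (nat \<Rightarrow> int) \<Rightarrow> bool" where "nz g x \<longleftrightarrow> (\<exists>m<2*g. odd (x m))"
definition df :: "nat \<Rightarrow> (nat \<Rightarrow> int) \<Rightarrow> (nat \<Rightarrow> int) \<Rightarrow> bool" where
  "df g x y \<longleftrightarrow> (\<exists>m<2*g. odd (x m) \<noteq> odd (y m))"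

lemma not_nz: "\<not> nz g x \<Longrightarrow> Mv 2 g x = 0"
proof -
  assume "\<not> nz g x"
  then have "vc 2 (2*g) x 0" by (auto simp: nz_def vc_def even_iff_mod_2_eq_zero)
  then show ?thesis using Mv_vc[OF p2] Mv_zero by metis
qed
lemma not_df: "\<not> df g x y \<Longrightarrow> Mv 2 g x = Mv 2 g y"
proof -
  assume "\<not> df g x y"
  then have "vc 2 (2*g) x y" unfolding df_def vc_def
    by (metis even_iff_mod_2_eq_zero odd_iff_mod_2_eq_one of_nat_numeral)
  then show ?thesis using Mv_vc[OF p2] by metis
qed
lemma om_e0_eg: "0 < g \<Longrightarrow> om g (ee 0) (ee g) = 1"
proof -
  assume g: "0 < g"
  have "om g (ee 0) (ee g) = (\<Sum>i<g. if i = 0 then 1 else 0)"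
    unfolding om_def using g by (intro sum.cong) (auto simp: ee_def)
  then show ?thesis using g by simp
qed

lemma odd_om_nz: "odd (om g x y) \<Longrightarrow> nz g x"
proof (rule ccontr)
  assume a: "odd (om g x y)" "\<not> nz g x"
  then have "vc 2 (2*g) x 0" by (auto simp: nz_def vc_def even_iff_mod_2_eq_zero)
  then have "om g x y mod int 2 = om g 0 y mod int 2" by (rule om_vc[OF _ vc_refl])
  moreover have "om g 0 y = 0" by (simp add: om_def)
  ultimately show False using a(1) by (simp add: even_iff_mod_2_eq_zero)
qed

lemma stepA: assumes g: "0 < g" and o: "odd (om g x y)"
  shows "Ff 2 g x y - Ff 2 g (ee 0) (ee g) \<in> HH 2 g"
proof -
  have e01: "odd (om g (ee 0) (ee g))" using om_e0_eg[OF g] by simp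
  obtain y' where y': "odd (om g x y')" "odd (om g (ee 0) y')"
  proof (cases "df g x (ee 0)")
    case True
    then obtain m1 where m1: "m1 < 2*g" "odd (x m1) \<noteq> odd (ee 0 m1)" by (auto simp: df_def)
    obtain m0 where m0: "m0 < 2*g" "odd (x m0)" using odd_om_nz[OF o] by (auto simp: nz_def)
    obtain a where a: "odd (om g a (ee 0))" "even (om g a x)"
      using D2[of 0 g "ee 0" m1 x] m1 g by (auto simp: ee_def)
    obtain b where b: "odd (om g b x)" "even (om g b (ee 0))"
      using D2[of m0 g x m1 "ee 0"] m0 m1 by auto
    show ?thesis
      by (rule that[of "a + b"]) (use a b in \<open>simp_all add: om_add_right odd_om_neg[of g x] odd_om_neg[of g "ee 0"]\<close>)
  next
    case False
    then have "vc 2 (2*g) x (ee 0)" unfolding df_def vc_def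
      by (metis even_iff_mod_2_eq_zero odd_iff_mod_2_eq_one of_nat_numeral)
    then have "om g x (ee g) mod int 2 = om g (ee 0) (ee g) mod int 2" by (rule om_vc[OF _ vc_refl])
    then have "odd (om g x (ee g))" using om_e0_eg[OF g] by (simp add: odd_iff_mod_2_eq_one)
    then show ?thesis using that e01 by blast
  qed
  have s1: "Ff 2 g x y - Ff 2 g x y' \<in> HH 2 g" by (rule L2[OF o y'(1)])
  have s2: "Ff 2 g x y' - Ff 2 g y' x \<in> HH 2 g" by (rule sym2)
  have o2: "odd (om g y' x)" "odd (om g y' (ee 0))" using y' by (simp_all add: odd_om_neg[of g y'])
  have s3: "Ff 2 g y' x - Ff 2 g y' (ee 0) \<in> HH 2 g" by (rule L2[OF o2])
  have s4: "Ff 2 g y' (ee 0) - Ff 2 g (ee 0) y' \<in> HH 2 g" by (rule sym2)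
  have s5: "Ff 2 g (ee 0) y' - Ff 2 g (ee 0) (ee g) \<in> HH 2 g" by (rule L2[OF y'(2) e01])
  have "(Ff 2 g x y - Ff 2 g x y') + (Ff 2 g x y' - Ff 2 g y' x) + (Ff 2 g y' x - Ff 2 g y' (ee 0))
     + (Ff 2 g y' (ee 0) - Ff 2 g (ee 0) y') + (Ff 2 g (ee 0) y' - Ff 2 g (ee 0) (ee g)) \<in> HH 2 g"
    using HH_add[OF p2 HH_add[OF p2 HH_add[OF p2 HH_add[OF p2 s1 s2] s3] s4] s5] .
  then show ?thesis by simp
qed
lemma Bf_sym: "Bf p g x a b = Bf p g x b a" by (simp add: Bf_def Nv_sym)

lemma stepB: assumes e: "even (om g x y)" shows "Ff 2 g x y \<in> HH 2 g"
proof (cases "nz g x \<and> nz g y \<and> df g x y")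
  case False
  then consider "\<not> nz g x" | "\<not> nz g y" | "\<not> df g x y" by blast
  then show ?thesis
  proof cases
    case 1 then show ?thesis using R0l[OF p2 Mv_sp[OF p2]] by (simp add: Ff_def not_nz)
  next
    case 2 then show ?thesis using R0r[OF p2 Mv_sp[OF p2]] by (simp add: Ff_def not_nz)
  next
    case 3 then show ?thesis using Fself[OF p2] by (simp add: Ff_def not_df)
  qed
next
  case True
  then obtain mx my m1 where m: "mx < 2*g" "odd (x mx)" "my < 2*g" "odd (y my)" "m1 < 2*g" "odd (x m1) \<noteq> odd (y m1)"
    by (auto simp: nz_def df_def)
  obtain a where a: "odd (om g a y)" "even (om g a x)" using D2[of my g y m1 x] m by blast
  obtain b where b: "odd (om g b x)" "even (om g b y)" using D2[of mx g x m1 y] m by auto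
  have ax: "even (om g x a)" using a(2) by (simp add: odd_om_neg[of g x a])
  have bx: "odd (om g x b)" using b(1) by (simp add: odd_om_neg[of g x b])
  have ay: "odd (om g y a)" using a(1) by (simp add: odd_om_neg[of g y a])
  have by': "even (om g y b)" using b(2) by (simp add: odd_om_neg[of g y b])
  have yx: "even (om g y x)" using e by (simp add: odd_om_neg[of g y x])
  have R1: "Ff 2 g x (a+b) - Ff 2 g x (a+b+x) \<in> HH 2 g"
    by (rule move2) (simp, simp only: om_add_right, use ax bx in simp)
  have R2: "Ff 2 g x (a+b) - Ff 2 g x (a+b+y) \<in> HH 2 g"
    by (rule move2) (fact yx, simp only: om_add_right, use ay by' in simp)
  have R3: "Ff 2 g x a - Ff 2 g x (a + (x+y)) \<in> HH 2 g"
    by (rule move2) (simp only: om_add_left, use yx in simp, simp only: om_add_left, use ax ay in simp)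
  have R4: "Ff 2 g x b - Ff 2 g x (b + (x+y)) \<in> HH 2 g"
    by (rule move2) (simp only: om_add_left, use yx in simp, simp only: om_add_left, use bx by' in simp)
  have X1: "Ff 2 g x (a+b+x) - Ff 2 g x (a+b) - Ff 2 g x x - Bf 2 g x (a+b) x \<in> HH 2 g" by (rule Fexp2[OF p2])
  have X2: "Ff 2 g x (a+b+y) - Ff 2 g x (a+b) - Ff 2 g x y - Bf 2 g x (a+b) y \<in> HH 2 g" by (rule Fexp2[OF p2])
  have X3: "Ff 2 g x (a+(x+y)) - Ff 2 g x a - Ff 2 g x (x+y) - Bf 2 g x a (x+y) \<in> HH 2 g" by (rule Fexp2[OF p2])
  have X4: "Ff 2 g x (b+(x+y)) - Ff 2 g x b - Ff 2 g x (x+y) - Bf 2 g x b (x+y) \<in> HH 2 g" by (rule Fexp2[OF p2])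
  have Y1: "Bf 2 g x (a+b) x - Bf 2 g x a x - Bf 2 g x b x \<in> HH 2 g" by (rule Bexp[OF p2])
  have Y2: "Bf 2 g x (a+b) y - Bf 2 g x a y - Bf 2 g x b y \<in> HH 2 g" by (rule Bexp[OF p2])
  have Y3: "Bf 2 g x (x+y) a - Bf 2 g x x a - Bf 2 g x y a \<in> HH 2 g" by (rule Bexp[OF p2])
  have Y4: "Bf 2 g x (x+y) b - Bf 2 g x x b - Bf 2 g x y b \<in> HH 2 g" by (rule Bexp[OF p2])
  have Z: "Ff 2 g x x \<in> HH 2 g" by (rule Fself[OF p2])
  have T1: "frag_cmul (int 2) (Bf 2 g x x b) \<in> HH 2 g" unfolding Bf_def by (intro Rp p2 Mv_sp Nv_sp)
  have T2: "frag_cmul (int 2) (Bf 2 g x y b) \<in> HH 2 g" unfolding Bf_def by (intro Rp p2 Mv_sp Nv_sp)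
  define r1 where "r1 = Ff 2 g x (a+b) - Ff 2 g x (a+b+x)"
  define r2 where "r2 = Ff 2 g x (a+b) - Ff 2 g x (a+b+y)"
  define r3 where "r3 = Ff 2 g x a - Ff 2 g x (a + (x+y))"
  define r4 where "r4 = Ff 2 g x b - Ff 2 g x (b + (x+y))"
  define x1 where "x1 = Ff 2 g x (a+b+x) - Ff 2 g x (a+b) - Ff 2 g x x - Bf 2 g x (a+b) x"
  define x2 where "x2 = Ff 2 g x (a+b+y) - Ff 2 g x (a+b) - Ff 2 g x y - Bf 2 g x (a+b) y"
  define x3 where "x3 = Ff 2 g x (a+(x+y)) - Ff 2 g x a - Ff 2 g x (x+y) - Bf 2 g x a (x+y)"
  define x4 where "x4 = Ff 2 g x (b+(x+y)) - Ff 2 g x b - Ff 2 g x (x+y) - Bf 2 g x b (x+y)"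
  define y1 where "y1 = Bf 2 g x (a+b) x - Bf 2 g x a x - Bf 2 g x b x"
  define y2 where "y2 = Bf 2 g x (a+b) y - Bf 2 g x a y - Bf 2 g x b y"
  define y3 where "y3 = Bf 2 g x (x+y) a - Bf 2 g x x a - Bf 2 g x y a"
  define y4 where "y4 = Bf 2 g x (x+y) b - Bf 2 g x x b - Bf 2 g x y b"
  define z where "z = Ff 2 g x x"
  define t1 where "t1 = frag_cmul (int 2) (Bf 2 g x x b)"
  define t2 where "t2 = frag_cmul (int 2) (Bf 2 g x y b)"
  define I where "I = - (r1 + x1) - z - y1"
  define II where "II = - (r2 + x2) - y2"
  define III where "III = - (r3 + x3) - y3"
  define IV where "IV = - (r4 + x4) - y4"
  have sym: "Bf 2 g x a x = Bf 2 g x x a" "Bf 2 g x b x = Bf 2 g x x b" "Bf 2 g x a y = Bf 2 g x y a"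
    "Bf 2 g x b y = Bf 2 g x y b" "Bf 2 g x a (x+y) = Bf 2 g x (x+y) a" "Bf 2 g x b (x+y) = Bf 2 g x (x+y) b"
    by (simp_all only: Bf_sym)
  have t: "frag_cmul (int 2) (Bf 2 g x x b) = Bf 2 g x x b + Bf 2 g x x b"
     "frag_cmul (int 2) (Bf 2 g x y b) = Bf 2 g x y b + Bf 2 g x y b"
    using frag_cmul_distrib[of 1 1 "Bf 2 g x x b"] frag_cmul_distrib[of 1 1 "Bf 2 g x y b"] by simp_all
  have "Ff 2 g x y = II - III + IV + I - t1 - t2"
    unfolding I_def II_def III_def IV_def r1_def r2_def r3_def r4_def x1_def x2_def x3_def x4_def
      y1_def y2_def y3_def y4_def z_def t1_def t2_def t sym
    by (simp add: algebra_simps)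
  moreover have "II - III + IV + I - t1 - t2 \<in> HH 2 g"
  proof -
    have "r1 \<in> HH 2 g" "r2 \<in> HH 2 g" "r3 \<in> HH 2 g" "r4 \<in> HH 2 g" "x1 \<in> HH 2 g" "x2 \<in> HH 2 g"
      "x3 \<in> HH 2 g" "x4 \<in> HH 2 g" "y1 \<in> HH 2 g" "y2 \<in> HH 2 g" "y3 \<in> HH 2 g" "y4 \<in> HH 2 g"
      "z \<in> HH 2 g" "t1 \<in> HH 2 g" "t2 \<in> HH 2 g"
      unfolding r1_def r2_def r3_def r4_def x1_def x2_def x3_def x4_def y1_def y2_def y3_def y4_def
        z_def t1_def t2_def by (fact R1 R2 R3 R4 X1 X2 X3 X4 Y1 Y2 Y3 Y4 Z T1 T2)+
    then have "I \<in> HH 2 g" "II \<in> HH 2 g" "III \<in> HH 2 g" "IV \<in> HH 2 g" "t1 \<in> HH 2 g" "t2 \<in> HH 2 g"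
      unfolding I_def II_def III_def IV_def by (auto intro!: HH_diff[OF p2] HH_add[OF p2] HH_neg[OF p2])
    then show ?thesis by (intro HH_diff[OF p2] HH_add[OF p2])
  qed
  ultimately show ?thesis by simp
qed
lemma evenmul: assumes "even k" "M \<in> sp_lie 2 g" "N \<in> sp_lie 2 g"
  shows "frag_cmul k (frag_of (M,N)) \<in> HH 2 g"
proof -
  obtain j where j: "k = 2 * j" using assms(1) by (auto elim: evenE)
  have "frag_cmul j (frag_cmul (int 2) (frag_of (M,N))) \<in> HH 2 g"
    by (intro HH_cmul[OF p2] Rp[OF p2] assms(2,3))
  then show ?thesis using j by (simp add: mult.commute)
qed

abbreviation z0 :: "nat \<Rightarrow> (mat \<times> mat \<Rightarrow>\<^sub>0 int)" where "z0 g \<equiv> Ff 2 g (ee 0) (ee g)"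

lemma evenz: "even k \<Longrightarrow> frag_cmul k (z0 g) \<in> HH 2 g"
  unfolding Ff_def by (intro evenmul Mv_sp p2)

lemma two_F: assumes "0 < g" shows "Ff 2 g x y - frag_cmul (om g x y) (z0 g) \<in> HH 2 g"
proof (cases "odd (om g x y)")
  case True
  have "(Ff 2 g x y - z0 g) - frag_cmul (om g x y - 1) (z0 g) \<in> HH 2 g"
    using HH_diff[OF p2 stepA[OF assms True] evenz[of "om g x y - 1" g]] True by simp
  then show ?thesis by (simp add: frag_cmul_diff_distrib algebra_simps)
next
  case False
  then show ?thesis using HH_diff[OF p2 stepB[of g x y] evenz[of "om g x y" g]] by simp
qed

definition dg :: "nat \<Rightarrow> mat \<Rightarrow> nat \<Rightarrow> int" where "dg g M = (\<lambda>i. mm (2*g) (Jm g) M i i)"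
definition bt :: "nat \<Rightarrow> mat \<Rightarrow> mat \<Rightarrow> int" where "bt g M N = om g (dg g M) (dg g N)"

lemma dg_vc: "mc p (2*g) A A' \<Longrightarrow> vc p (2*g) (dg g A) (dg g A')"
  using mc_mmR[of p "2*g" A A' "Jm g"] by (simp add: mc_def vc_def dg_def)
lemma dg_add: "dg g (A + B) = dg g A + dg g B"
  unfolding dg_def mm_add_right by (simp add: plus_fun_def)

lemma sq_mod2: "(- (r * r)) mod 2 = (r::int) mod 2"
proof -
  have "- (r * r) - r = - (r * (r + 1))" by algebra
  moreover have "even (r * (r+1))" by simp
  ultimately have "2 dvd (- (r * r) - r)" by simp
  then show ?thesis by (simp add: mod_eq_dvd_iff)
qed

lemma dg_Mv: "vc 2 (2*g) (dg g (Mv 2 g u)) (rv g u)"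
proof -
  have "vc 2 (2*g) (dg g (Mv 2 g u)) (dg g (op u (rv g u)))" by (rule dg_vc[OF Mv_mc])
  moreover have "vc 2 (2*g) (dg g (op u (rv g u))) (rv g u)"
    unfolding vc_def
  proof (intro allI impI)
    fix i assume i: "i < 2*g"
    have "dg g (op u (rv g u)) i = - (rv g u i * rv g u i)"
      unfolding dg_def mm_op_right using mv_J[OF i, of u] by (simp add: op_def)
    then show "dg g (op u (rv g u)) i mod int 2 = rv g u i mod int 2" by (simp add: sq_mod2)
  qed
  ultimately show ?thesis using vc_trans by blast
qed

lemma om_rv_rv: "om g (rv g u) (rv g v) = om g u v"
  unfolding om_def rv_def by (intro sum.cong) auto

lemma bt_Mv: "bt g (Mv 2 g u) (Mv 2 g v) mod 2 = om g u v mod 2"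
  using om_vc[OF dg_Mv dg_Mv, of g u v] by (simp add: bt_def om_rv_rv)

lemma bt_add_left: "bt g (mat_add 2 (2*g) A B) N mod 2 = (bt g A N + bt g B N) mod 2"
proof -
  have "vc 2 (2*g) (dg g (mat_add 2 (2*g) A B)) (dg g A + dg g B)"
    unfolding dg_add[symmetric] by (rule dg_vc[OF mat_add_mc])
  then have "om g (dg g (mat_add 2 (2*g) A B)) (dg g N) mod int 2 = om g (dg g A + dg g B) (dg g N) mod int 2"
    by (rule om_vc[OF _ vc_refl])
  then show ?thesis by (simp add: bt_def om_add_left)
qed
lemma bt_add_right: "bt g N (mat_add 2 (2*g) A B) mod 2 = (bt g N A + bt g N B) mod 2"
proof -
  have "vc 2 (2*g) (dg g (mat_add 2 (2*g) A B)) (dg g A + dg g B)"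
    unfolding dg_add[symmetric] by (rule dg_vc[OF mat_add_mc])
  then have "om g (dg g N) (dg g (mat_add 2 (2*g) A B)) mod int 2 = om g (dg g N) (dg g A + dg g B) mod int 2"
    by (rule om_vc[OF vc_refl])
  then show ?thesis by (simp add: bt_def om_add_right)
qed
lemma bt_self: "bt g M M = 0" by (simp add: bt_def)
lemma bt_cj: assumes X: "X \<in> Sp_grp 2 g" "mat_mul 2 (2*g) X Y = mat_one (2*g)"
  and M: "M \<in> sp_lie 2 g" and N: "N \<in> sp_lie 2 g"
  shows "bt g (cj 2 g X Y M) (cj 2 g X Y N) mod 2 = bt g M N mod 2"
proof -
  have inner: "bt g (cj 2 g X Y (Mv 2 g u)) (cj 2 g X Y N) mod 2 = bt g (Mv 2 g u) N mod 2"
    if "N \<in> sp_lie 2 g" for u N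
  proof (rule span[where P="\<lambda>N. bt g (cj 2 g X Y (Mv 2 g u)) (cj 2 g X Y N) mod 2 = bt g (Mv 2 g u) N mod 2", OF p2 _ _ that])
    fix v
    have "bt g (cj 2 g X Y (Mv 2 g u)) (cj 2 g X Y (Mv 2 g v)) mod 2
        = om g (mv (2*g) X u) (mv (2*g) X v) mod 2"
      using X by (simp add: cj_Mv[OF p2] bt_Mv)
    also have "\<dots> = om g u v mod 2" using Sp_om[OF p2 X(1)] by simp
    also have "\<dots> = bt g (Mv 2 g u) (Mv 2 g v) mod 2" by (simp add: bt_Mv)
    finally show "bt g (cj 2 g X Y (Mv 2 g u)) (cj 2 g X Y (Mv 2 g v)) mod 2 = bt g (Mv 2 g u) (Mv 2 g v) mod 2" .
  next
    fix A B assume ab: "bt g (cj 2 g X Y (Mv 2 g u)) (cj 2 g X Y A) mod 2 = bt g (Mv 2 g u) A mod 2"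
      "bt g (cj 2 g X Y (Mv 2 g u)) (cj 2 g X Y B) mod 2 = bt g (Mv 2 g u) B mod 2"
    have "bt g (cj 2 g X Y (Mv 2 g u)) (cj 2 g X Y (mat_add 2 (2*g) A B)) mod 2
        = (bt g (cj 2 g X Y (Mv 2 g u)) (cj 2 g X Y A) + bt g (cj 2 g X Y (Mv 2 g u)) (cj 2 g X Y B)) mod 2"
      by (simp add: cj_add bt_add_right)
    also have "\<dots> = (bt g (Mv 2 g u) A + bt g (Mv 2 g u) B) mod 2"
      by (rule mod_add_cong) (use ab in blast)+
    also have "\<dots> = bt g (Mv 2 g u) (mat_add 2 (2*g) A B) mod 2" by (simp add: bt_add_right)
    finally show "bt g (cj 2 g X Y (Mv 2 g u)) (cj 2 g X Y (mat_add 2 (2*g) A B)) mod 2 = bt g (Mv 2 g u) (mat_add 2 (2*g) A B) mod 2" .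
  qed
  have "\<forall>N\<in>sp_lie 2 g. bt g (cj 2 g X Y M) (cj 2 g X Y N) mod 2 = bt g M N mod 2"
  proof (rule span[where P="\<lambda>M. \<forall>N\<in>sp_lie 2 g. bt g (cj 2 g X Y M) (cj 2 g X Y N) mod 2 = bt g M N mod 2", OF p2 _ _ M])
    show "\<forall>N\<in>sp_lie 2 g. bt g (cj 2 g X Y (Mv 2 g u)) (cj 2 g X Y N) mod 2 = bt g (Mv 2 g u) N mod 2" for u
      using inner by blast
  next
    fix A B assume ab: "\<forall>N\<in>sp_lie 2 g. bt g (cj 2 g X Y A) (cj 2 g X Y N) mod 2 = bt g A N mod 2"
      "\<forall>N\<in>sp_lie 2 g. bt g (cj 2 g X Y B) (cj 2 g X Y N) mod 2 = bt g B N mod 2"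
    show "\<forall>N\<in>sp_lie 2 g. bt g (cj 2 g X Y (mat_add 2 (2*g) A B)) (cj 2 g X Y N) mod 2 = bt g (mat_add 2 (2*g) A B) N mod 2"
    proof
      fix N assume N: "N \<in> sp_lie 2 g"
      have "bt g (cj 2 g X Y (mat_add 2 (2*g) A B)) (cj 2 g X Y N) mod 2
          = (bt g (cj 2 g X Y A) (cj 2 g X Y N) + bt g (cj 2 g X Y B) (cj 2 g X Y N)) mod 2"
        by (simp add: cj_add bt_add_left)
      also have "\<dots> = (bt g A N + bt g B N) mod 2"
        by (rule mod_add_cong) (use ab N in blast)+
      also have "\<dots> = bt g (mat_add 2 (2*g) A B) N mod 2" by (simp add: bt_add_left)
      finally show "bt g (cj 2 g X Y (mat_add 2 (2*g) A B)) (cj 2 g X Y N) mod 2 = bt g (mat_add 2 (2*g) A B) N mod 2" .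
    qed
  qed
  then show ?thesis using N by blast
qed

lemma Lin: assumes g: "0 < g" and M: "M \<in> sp_lie 2 g" and N: "N \<in> sp_lie 2 g"
  shows "frag_of (M,N) - frag_cmul (bt g M N) (z0 g) \<in> HH 2 g"
proof -
  have ev: "frag_cmul k (z0 g) \<in> HH 2 g" if "k mod 2 = 0" for k using that evenz by (simp add: even_iff_mod_2_eq_zero)
  have inner: "frag_of (Mv 2 g u, N) - frag_cmul (bt g (Mv 2 g u) N) (z0 g) \<in> HH 2 g"
    if "N \<in> sp_lie 2 g" for u N
  proof (rule span[where P="\<lambda>N. frag_of (Mv 2 g u, N) - frag_cmul (bt g (Mv 2 g u) N) (z0 g) \<in> HH 2 g", OF p2 _ _ that])
    fix v
    have "(Ff 2 g u v - frag_cmul (om g u v) (z0 g)) - frag_cmul (bt g (Mv 2 g u) (Mv 2 g v) - om g u v) (z0 g) \<in> HH 2 g"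
      by (rule HH_diff[OF p2 two_F[OF g] ev]) (simp add: bt_Mv mod_diff_eq[symmetric])
    then show "frag_of (Mv 2 g u, Mv 2 g v) - frag_cmul (bt g (Mv 2 g u) (Mv 2 g v)) (z0 g) \<in> HH 2 g"
      by (simp add: Ff_def frag_cmul_diff_distrib)
  next
    fix A B assume ab: "A \<in> sp_lie 2 g" "B \<in> sp_lie 2 g"
      "frag_of (Mv 2 g u, A) - frag_cmul (bt g (Mv 2 g u) A) (z0 g) \<in> HH 2 g"
      "frag_of (Mv 2 g u, B) - frag_cmul (bt g (Mv 2 g u) B) (z0 g) \<in> HH 2 g"
    have r: "frag_of (Mv 2 g u, mat_add 2 (2*g) A B) - frag_of (Mv 2 g u, A) - frag_of (Mv 2 g u, B) \<in> HH 2 g"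
      using ab by (intro Rr Mv_sp p2)
    have e: "frag_cmul (bt g (Mv 2 g u) A + bt g (Mv 2 g u) B - bt g (Mv 2 g u) (mat_add 2 (2*g) A B)) (z0 g) \<in> HH 2 g"
      by (rule ev) (simp add: bt_add_right mod_diff_eq[symmetric])
    have "(frag_of (Mv 2 g u, mat_add 2 (2*g) A B) - frag_of (Mv 2 g u, A) - frag_of (Mv 2 g u, B))
       + (frag_of (Mv 2 g u, A) - frag_cmul (bt g (Mv 2 g u) A) (z0 g))
       + (frag_of (Mv 2 g u, B) - frag_cmul (bt g (Mv 2 g u) B) (z0 g))
       + frag_cmul (bt g (Mv 2 g u) A + bt g (Mv 2 g u) B - bt g (Mv 2 g u) (mat_add 2 (2*g) A B)) (z0 g) \<in> HH 2 g"
      using HH_add[OF p2 HH_add[OF p2 HH_add[OF p2 r ab(3)] ab(4)] e] .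
    then show "frag_of (Mv 2 g u, mat_add 2 (2*g) A B) - frag_cmul (bt g (Mv 2 g u) (mat_add 2 (2*g) A B)) (z0 g) \<in> HH 2 g"
      by (simp add: frag_cmul_diff_distrib frag_cmul_distrib algebra_simps)
  qed
  have "\<forall>N\<in>sp_lie 2 g. frag_of (M,N) - frag_cmul (bt g M N) (z0 g) \<in> HH 2 g"
  proof (rule span[where P="\<lambda>M. \<forall>N\<in>sp_lie 2 g. frag_of (M,N) - frag_cmul (bt g M N) (z0 g) \<in> HH 2 g", OF p2 _ _ M])
    show "\<forall>N\<in>sp_lie 2 g. frag_of (Mv 2 g u, N) - frag_cmul (bt g (Mv 2 g u) N) (z0 g) \<in> HH 2 g" for u
      using inner by blast
  next
    fix A B assume ab: "A \<in> sp_lie 2 g" "B \<in> sp_lie 2 g"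
      "\<forall>N\<in>sp_lie 2 g. frag_of (A,N) - frag_cmul (bt g A N) (z0 g) \<in> HH 2 g"
      "\<forall>N\<in>sp_lie 2 g. frag_of (B,N) - frag_cmul (bt g B N) (z0 g) \<in> HH 2 g"
    show "\<forall>N\<in>sp_lie 2 g. frag_of (mat_add 2 (2*g) A B, N) - frag_cmul (bt g (mat_add 2 (2*g) A B) N) (z0 g) \<in> HH 2 g"
    proof
      fix N assume N: "N \<in> sp_lie 2 g"
      have r: "frag_of (mat_add 2 (2*g) A B, N) - frag_of (A, N) - frag_of (B, N) \<in> HH 2 g"
        using ab N by (intro Rl)
      have e: "frag_cmul (bt g A N + bt g B N - bt g (mat_add 2 (2*g) A B) N) (z0 g) \<in> HH 2 g"
        by (rule ev) (simp add: bt_add_left mod_diff_eq[symmetric])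
      have "(frag_of (mat_add 2 (2*g) A B, N) - frag_of (A, N) - frag_of (B, N))
         + (frag_of (A,N) - frag_cmul (bt g A N) (z0 g))
         + (frag_of (B,N) - frag_cmul (bt g B N) (z0 g))
         + frag_cmul (bt g A N + bt g B N - bt g (mat_add 2 (2*g) A B) N) (z0 g) \<in> HH 2 g"
        using HH_add[OF p2 HH_add[OF p2 HH_add[OF p2 r bspec[OF ab(3) N]] bspec[OF ab(4) N]] e] .
      then show "frag_of (mat_add 2 (2*g) A B, N) - frag_cmul (bt g (mat_add 2 (2*g) A B) N) (z0 g) \<in> HH 2 g"
        by (simp add: frag_cmul_diff_distrib frag_cmul_distrib algebra_simps)
    qed
  qed
  then show ?thesis using N by blast
qed
definition Lf :: "nat \<Rightarrow> (mat \<times> mat \<Rightarrow>\<^sub>0 int) \<Rightarrow> int" where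
  "Lf g c = Poly_Mapping.lookup (frag_extend (\<lambda>k. frag_cmul (bt g (fst k) (snd k)) (frag_of ())) c) ()"

lemma Lf_add: "Lf g (a + b) = Lf g a + Lf g b" by (simp add: Lf_def frag_extend_add lookup_add)
lemma Lf_diff: "Lf g (a - b) = Lf g a - Lf g b" by (simp add: Lf_def frag_extend_diff lookup_minus)
lemma Lf_of: "Lf g (frag_of (M,N)) = bt g M N" by (simp add: Lf_def)
lemma Lf_0: "Lf g 0 = 0" by (simp add: Lf_def)

definition hh :: "nat \<Rightarrow> (mat \<times> mat \<Rightarrow>\<^sub>0 int) \<Rightarrow> int" where "hh g c = Lf g c mod 2"

lemma hh_hom: "hh g \<in> hom (G0 2 g) (integer_mod_group 2)"
proof (rule homI)
  fix x assume "x \<in> carrier (G0 2 g)"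
  show "hh g x \<in> carrier (integer_mod_group 2)" by (simp add: hh_def carrier_integer_mod_group)
next
  fix x y
  show "hh g (x \<otimes>\<^bsub>G0 2 g\<^esub> y) = hh g x \<otimes>\<^bsub>integer_mod_group 2\<^esub> hh g y"
    by (simp add: hh_def Lf_add mod_add_eq)
qed

lemma hh_group_hom: "group_hom (G0 2 g) (integer_mod_group 2) (hh g)"
  unfolding group_hom_def group_hom_axioms_def using hh_hom by simp




lemma mod2_diff: "a mod 2 = b mod 2 \<Longrightarrow> (a - b) mod 2 = (0::int)"
  by (simp add: mod_eq_dvd_iff)

lemma rels_kernel: assumes "r \<in> coinv_rels 2 g" shows "hh g r = 0"
  using assms unfolding coinv_rels_def
proof (elim UnE CollectE exE conjE)
  fix M M' N assume e: "r = frag_of (mat_add 2 (2*g) M M', N) - frag_of (M, N) - frag_of (M', N)"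
  show "hh g r = 0" unfolding e hh_def Lf_diff Lf_of
    using mod2_diff[OF bt_add_left[of g M M' N]] by (simp add: diff_diff_eq)
next
  fix M N N' assume e: "r = frag_of (M, mat_add 2 (2*g) N N') - frag_of (M, N) - frag_of (M, N')"
  show "hh g r = 0" unfolding e hh_def Lf_diff Lf_of
    using mod2_diff[OF bt_add_right[of g M N N']] by (simp add: diff_diff_eq)
next
  fix M assume e: "r = frag_of (M, M)"
  show "hh g r = 0" unfolding e hh_def Lf_of by (simp add: bt_self)
next
  fix X Y M N assume e: "r = frag_of (mat_mul 2 (2*g) X (mat_mul 2 (2*g) M Y), mat_mul 2 (2*g) X (mat_mul 2 (2*g) N Y)) - frag_of (M, N)"
    and a: "X \<in> Sp_grp 2 g" "is_mat 2 (2*g) Y" "mat_mul 2 (2*g) X Y = mat_one (2*g)" "M \<in> sp_lie 2 g" "N \<in> sp_lie 2 g"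
  have "bt g (cj 2 g X Y M) (cj 2 g X Y N) mod 2 = bt g M N mod 2" using bt_cj a by blast
  then show "hh g r = 0" unfolding e hh_def Lf_diff Lf_of cj_def[symmetric]
    by (rule mod2_diff)
qed

lemma HH_kernel: "HH 2 g \<subseteq> kernel (G0 2 g) (integer_mod_group 2) (hh g)"
  unfolding HH_def
proof (rule group.generate_subgroup_incl[OF group_free_Abelian_group _ group_hom.subgroup_kernel[OF hh_group_hom]])
  show "coinv_rels 2 g \<subseteq> kernel (G0 2 g) (integer_mod_group 2) (hh g)"
  proof
    fix r assume r: "r \<in> coinv_rels 2 g"
    then have "r \<in> carrier (G0 2 g)" using rels_carrier[OF p2, of g] by blast
    then show "r \<in> kernel (G0 2 g) (integer_mod_group 2) (hh g)" using rels_kernel[OF r] by (simp add: kernel_def)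
  qed
qed

lemma kernel_HH: assumes g: "0 < g" shows "kernel (G0 2 g) (integer_mod_group 2) (hh g) \<subseteq> HH 2 g"
proof
  fix c assume "c \<in> kernel (G0 2 g) (integer_mod_group 2) (hh g)"
  then have c: "Poly_Mapping.keys c \<subseteq> sp_lie 2 g \<times> sp_lie 2 g" "Lf g c mod 2 = 0" by (auto simp: kernel_def hh_def)
  have "c - frag_cmul (Lf g c) (z0 g) \<in> HH 2 g"
  proof (rule free_Abelian_group_induct[OF c(1)])
    show "0 - frag_cmul (Lf g 0) (z0 g) \<in> HH 2 g" by (simp add: Lf_0 HH_zero[OF p2])
    fix x y assume "x - frag_cmul (Lf g x) (z0 g) \<in> HH 2 g" "y - frag_cmul (Lf g y) (z0 g) \<in> HH 2 g"
    then have "(x - frag_cmul (Lf g x) (z0 g)) - (y - frag_cmul (Lf g y) (z0 g)) \<in> HH 2 g" by (rule HH_diff[OF p2])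
    then show "x - y - frag_cmul (Lf g (x - y)) (z0 g) \<in> HH 2 g"
      by (simp add: Lf_diff frag_cmul_diff_distrib algebra_simps)
  next
    fix a assume a: "a \<in> sp_lie 2 g \<times> sp_lie 2 g"
    obtain M N where mn: "a = (M,N)" by (cases a)
    have "frag_of (M,N) - frag_cmul (bt g M N) (z0 g) \<in> HH 2 g" using Lin[OF g] a mn by blast
    then show "frag_of a - frag_cmul (Lf g (frag_of a)) (z0 g) \<in> HH 2 g"
      unfolding mn Lf_of .
  qed
  moreover have "frag_cmul (Lf g c) (z0 g) \<in> HH 2 g"
    by (rule evenz) (use c(2) in \<open>simp add: even_iff_mod_2_eq_zero\<close>)
  ultimately have "(c - frag_cmul (Lf g c) (z0 g)) + frag_cmul (Lf g c) (z0 g) \<in> HH 2 g" by (rule HH_add[OF p2])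
  then show "c \<in> HH 2 g" by simp
qed

theorem two_case: assumes g: "0 < g" shows "H2_coinv 2 g \<cong> integer_mod_group 2"
proof -
  have K: "kernel (G0 2 g) (integer_mod_group 2) (hh g) = HH 2 g" by (rule equalityI[OF kernel_HH[OF g] HH_kernel])
  have "hh g ` carrier (G0 2 g) = carrier (integer_mod_group 2)"
  proof
    show "hh g ` carrier (G0 2 g) \<subseteq> carrier (integer_mod_group 2)"
      by (auto simp: hh_def carrier_integer_mod_group)
    have z: "z0 g \<in> carrier (G0 2 g)" by (simp add: Ff_def Mv_sp[OF p2])
    have "hh g (z0 g) = bt g (Mv 2 g (ee 0)) (Mv 2 g (ee g)) mod 2" by (simp only: hh_def Ff_def Lf_of)
    also have "\<dots> = om g (ee 0) (ee g) mod 2" by (rule bt_Mv)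
    also have "\<dots> = 1" using om_e0_eg[OF g] by simp
    finally have h1: "hh g (z0 g) = 1" .
    have h0: "hh g 0 = 0" by (simp add: hh_def Lf_0)
    have z0c: "(0::(mat \<times> mat \<Rightarrow>\<^sub>0 int)) \<in> carrier (G0 2 g)" by simp
    show "carrier (integer_mod_group 2) \<subseteq> hh g ` carrier (G0 2 g)"
    proof
      fix x assume "x \<in> carrier (integer_mod_group 2)"
      then have "x = 0 \<or> x = 1" by (auto simp: carrier_integer_mod_group)
      then show "x \<in> hh g ` carrier (G0 2 g)"
      proof
        assume "x = 0" then show ?thesis using h0 z0c by (metis image_eqI)
      next
        assume "x = 1" then show ?thesis using h1 z by (metis image_eqI)
      qed
    qed
  qed
  then have "G0 2 g Mod kernel (G0 2 g) (integer_mod_group 2) (hh g) \<cong> integer_mod_group 2"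
    by (rule group_hom.FactGroup_iso[OF hh_group_hom])
  then show ?thesis unfolding H2_eq K .
qed

theorem lemma4p10:
  fixes g p :: nat
  assumes "g \<ge> 3" and "prime p"
  shows "(odd p \<longrightarrow> trivial_group (H2_coinv p g))
       \<and> (p = 2 \<longrightarrow> H2_coinv p g \<cong> integer_mod_group 2)"
proof (intro conjI impI)
  have p1: "1 < p" using assms(2) prime_gt_1_nat by blast
  show "trivial_group (H2_coinv p g)" if "odd p" using odd_case[OF p1 that assms(2)] .
  show "H2_coinv p g \<cong> integer_mod_group 2" if "p = 2" using two_case[of g] assms(1) that by simp
qed

end
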